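(* Let $I=(0,1)$. For every integer $k\ge1$ and every $0<s<1$, \[BV(I)\sim BGV^k(I)\sim BGV^{k+s}(I),\] namely the three function spaces are topologically equivalent.
   Context: For $r=k+s$ with $k\in\mathbb N$, $0\le s<1$ and $\alpha\in(0,\infty)^{k+1}$, $BGV^{r}_\alpha(I)=\{u\in L^1(I): |u|_{TGV^{r}_\alpha(I)}<\infty\}$ with norm $\|u\|_{L^1(I)}+|u|_{TGV^r_\alpha(I)}$, and $BGV^r(I)$ denotes $BGV^r_\alpha(I)$ for some $\alpha$ (membership does not depend on $\alpha$). Here, with $|\mu|_{\mathcal M_b}$ the total variation of a measure, $u'$ the distributional derivative, and $|v|_{W^{s,p}(I)}=(\int_I\int_I|v(x)-v(y)|^p|x-y|^{-1-sp}dxdy)^{1/p}$: integer order $|u|_{TGV^1_\beta}=\beta_0|u'|_{\mathcal M_b}$, and $|u|_{TGV^{m+1}_\beta}=\inf\{\beta_0|u'-v_0|_{\mathcal M_b}+\beta_1|v_0'-v_1|_{\mathcal M_b}+\dots+\beta_{m-1}|v_{m-2}'-v_{m-1}|_{\mathcal M_b}+\beta_m|v_{m-1}'|_{\mathcal M_b}: v_i\in BV(I)\}$; fractional order ($0<s<1$): $|u|_{TGV^{1+s}_\alpha}=\inf\{\alpha_0|u'-sv_0|_{\mathcal M_b}+\alpha_1s(1-s)|v_0|_{W^{s,1+s(1-s)}}+\alpha_0s(1-s)|\int_Iv_0|: v_0\in W^{s,1+s(1-s)}(I)\}$ and for $k>1$, $|u|_{TGV^{k+s}_\alpha}=\inf\{\alpha_0|u'-v_0|_{\mathcal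 M_b}+\dots+\alpha_{k-1}|v_{k-2}'-sv_{k-1}|_{\mathcal M_b}+\alpha_ks(1-s)|v_{k-1}|_{W^{s,1+s(1-s)}}+\alpha_{k-1}s(1-s)|\int_Iv_{k-1}|: v_i\in BV(I), v_{k-1}\in W^{s,1+s(1-s)}(I)\}$. *)

theory Defs
  imports "HOL-Analysis.Analysis"
begin

definition I01 :: "real set" where "I01 = {0<..<1}"

definition test_fns :: "(real \<Rightarrow> real) set" where
  "test_fns = {\<phi>. \<phi> C1_differentiable_on UNIV \<and>
      (\<exists>a b. 0 < a \<and> a \<le> b \<and> b < 1 \<and> (\<forall>x. x \<notin> {a..b} \<longrightarrow> \<phi> x = 0)) \<and>
      (\<forall>x. \<bar>\<phi> x\<bar> \<le> 1)}"

text \<open>Total variation of the distribution u' - v on I (|u' - v|_{M_b}), as the dual norm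
  against test functions; equals +\<infinity> if u' - v is not a finite measure.\<close>
definition dtv :: "(real \<Rightarrow> real) \<Rightarrow> (real \<Rightarrow> real) \<Rightarrow> ereal" where
  "dtv u v = (SUP \<phi>\<in>test_fns. ereal (- (LINT x:I01|lborel. u x * deriv \<phi> x)
                                   - (LINT x:I01|lborel. v x * \<phi> x)))"

definition L1_on :: "(real \<Rightarrow> real) \<Rightarrow> bool" where
  "L1_on u \<longleftrightarrow> set_integrable lborel I01 u"

definition L1_norm :: "(real \<Rightarrow> real) \<Rightarrow> real" where
  "L1_norm u = (LINT x:I01|lborel. \<bar>u x\<bar>)"

definition BV_set :: "(real \<Rightarrow> real) set" where
  "BV_set = {u. L1_on u \<and> dtv u (\<lambda>_. 0) < \<infinity>}"

definition BV_norm :: "(real \<Rightarrow> real) \<Rightarrow> ereal" where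
  "BV_norm u = ereal (L1_norm u) + dtv u (\<lambda>_. 0)"

definition gagliardo :: "real \<Rightarrow> real \<Rightarrow> (real \<Rightarrow> real) \<Rightarrow> ennreal" where
  "gagliardo s p v = (\<integral>\<^sup>+ x\<in>I01. (\<integral>\<^sup>+ y\<in>I01.
      ennreal (\<bar>v x - v y\<bar> powr p / \<bar>x - y\<bar> powr (1 + s * p)) \<partial>lborel) \<partial>lborel)"

definition Wsp_semi :: "real \<Rightarrow> real \<Rightarrow> (real \<Rightarrow> real) \<Rightarrow> ereal" where
  "Wsp_semi s p v = (if gagliardo s p v = \<infinity> then \<infinity>
                     else ereal (enn2real (gagliardo s p v) powr (1 / p)))"

definition in_Wsp :: "real \<Rightarrow> real \<Rightarrow> (real \<Rightarrow> real) \<Rightarrow> bool" where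
  "in_Wsp s p v \<longleftrightarrow> v \<in> borel_measurable lborel \<and>
     (\<integral>\<^sup>+ x\<in>I01. ennreal (\<bar>v x\<bar> powr p) \<partial>lborel) < \<infinity> \<and> gagliardo s p v < \<infinity>"

text \<open>Integer order TGV^k_\<beta> (k \<ge> 1), weights \<beta> 0, ..., \<beta> (k-1).
  The chain is u, v 0, ..., v (k-2), and the last term is |v(k-2)'|.\<close>
definition TGV_int :: "nat \<Rightarrow> (nat \<Rightarrow> real) \<Rightarrow> (real \<Rightarrow> real) \<Rightarrow> ereal" where
  "TGV_int k \<beta> u = (INF v \<in> {v :: nat \<Rightarrow> real \<Rightarrow> real. \<forall>i<k-1. v i \<in> BV_set}.
      (\<Sum>i<k. ereal (\<beta> i) * dtv (if i = 0 then u else v (i - 1))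
                                  (if i = k - 1 then (\<lambda>_. 0) else v i)))"

definition TGV_frac :: "nat \<Rightarrow> real \<Rightarrow> (nat \<Rightarrow> real) \<Rightarrow> (real \<Rightarrow> real) \<Rightarrow> ereal" where
  "TGV_frac k s \<alpha> u = (INF v \<in> {v :: nat \<Rightarrow> real \<Rightarrow> real. (\<forall>i<k-1. v i \<in> BV_set) \<and>
                                   in_Wsp s (1 + s * (1 - s)) (v (k - 1))}.
      (\<Sum>i<k. ereal (\<alpha> i) * dtv (if i = 0 then u else v (i - 1))
                                  (if i = k - 1 then (\<lambda>x. s * v (k - 1) x) else v i))
      + ereal (\<alpha> k * s * (1 - s)) * Wsp_semi s (1 + s * (1 - s)) (v (k - 1))
      + ereal (\<alpha> (k - 1) * s * (1 - s) * \<bar>LINT x:I01|lborel. v (k - 1) x\<bar>))"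

definition BGV_int_set :: "nat \<Rightarrow> (nat \<Rightarrow> real) \<Rightarrow> (real \<Rightarrow> real) set" where
  "BGV_int_set k \<beta> = {u. L1_on u \<and> TGV_int k \<beta> u < \<infinity>}"

definition BGV_int_norm :: "nat \<Rightarrow> (nat \<Rightarrow> real) \<Rightarrow> (real \<Rightarrow> real) \<Rightarrow> ereal" where
  "BGV_int_norm k \<beta> u = ereal (L1_norm u) + TGV_int k \<beta> u"

definition BGV_frac_set :: "nat \<Rightarrow> real \<Rightarrow> (nat \<Rightarrow> real) \<Rightarrow> (real \<Rightarrow> real) set" where
  "BGV_frac_set k s \<alpha> = {u. L1_on u \<and> TGV_frac k s \<alpha> u < \<infinity>}"

definition BGV_frac_norm :: "nat \<Rightarrow> real \<Rightarrow> (nat \<Rightarrow> real) \<Rightarrow> (real \<Rightarrow> real) \<Rightarrow> ereal" where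
  "BGV_frac_norm k s \<alpha> u = ereal (L1_norm u) + TGV_frac k s \<alpha> u"

end

theory Submission
  imports Defs
begin

fun Cn :: "nat \<Rightarrow> (real \<Rightarrow> real) \<Rightarrow> bool" where
  "Cn 0 f = continuous_on UNIV f"
| "Cn (Suc n) f = ((\<forall>x. (f has_real_derivative deriv f x) (at x)) \<and> Cn n (deriv f))"

lemma Cn_cont: assumes "Cn n f" shows "continuous_on UNIV f"
proof (cases n)
  case 0 then show ?thesis using assms by simp
next
  case (Suc m)
  then have "\<forall>x. (f has_real_derivative deriv f x) (at x)" using assms by simp
  then show ?thesis by (meson DERIV_isCont continuous_at_imp_continuous_on)
qed

lemma Cn_Suc_mono: "Cn (Suc n) f \<Longrightarrow> Cn n f"
proof (induction n arbitrary: f)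
  case 0 then show ?case using Cn_cont by fastforce
next
  case (Suc n) then show ?case by auto
qed

lemma Cn_add: "Cn n f \<Longrightarrow> Cn n g \<Longrightarrow> Cn n (\<lambda>x. f x + g x)"
proof (induction n arbitrary: f g)
  case 0 then show ?case by (auto intro: continuous_intros)
next
  case (Suc n)
  have d: "\<And>x. ((\<lambda>x. f x + g x) has_real_derivative deriv f x + deriv g x) (at x)"
    using Suc.prems by (auto intro!: derivative_eq_intros)
  have "deriv (\<lambda>x. f x + g x) = (\<lambda>x. deriv f x + deriv g x)"
    using d DERIV_imp_deriv by blast
  then show ?case using d Suc by auto
qed

lemma Cn_cmult: "Cn n f \<Longrightarrow> Cn n (\<lambda>x. c * f x)"
proof (induction n arbitrary: f)
  case 0 then show ?case by (auto intro: continuous_intros)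
next
  case (Suc n)
  have d: "\<And>x. ((\<lambda>x. c * f x) has_real_derivative c * deriv f x) (at x)"
    using Suc.prems by (auto intro!: derivative_eq_intros)
  have "deriv (\<lambda>x. c * f x) = (\<lambda>x. c * deriv f x)"
    using d DERIV_imp_deriv by blast
  then show ?case using d Suc by auto
qed

lemma Cn_mult: "Cn n f \<Longrightarrow> Cn n g \<Longrightarrow> Cn n (\<lambda>x. f x * g x)"
proof (induction n arbitrary: f g)
  case 0 then show ?case by (auto intro: continuous_intros)
next
  case (Suc n)
  have d: "\<And>x. ((\<lambda>x. f x * g x) has_real_derivative deriv f x * g x + f x * deriv g x) (at x)"
    using Suc.prems by (auto intro!: derivative_eq_intros)
  have e: "deriv (\<lambda>x. f x * g x) = (\<lambda>x. deriv f x * g x + f x * deriv g x)"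
    using d DERIV_imp_deriv by blast
  have "Cn n (deriv f)" "Cn n (deriv g)" "Cn n f" "Cn n g"
    using Suc.prems Cn_Suc_mono by auto
  then have "Cn n (\<lambda>x. deriv f x * g x + f x * deriv g x)"
    using Suc.IH Cn_add by blast
  then show ?case using d e by auto
qed

lemma Cn_affine: "Cn n f \<Longrightarrow> Cn n (\<lambda>x. f (c * x + d))"
proof (induction n arbitrary: f)
  case 0 then show ?case
    by (auto intro!: continuous_on_compose2[of UNIV f] continuous_intros)
next
  case (Suc n)
  have d: "\<And>x. ((\<lambda>x. f (c * x + d)) has_real_derivative deriv f (c * x + d) * c) (at x)"
    using Suc.prems by (auto intro!: derivative_eq_intros DERIV_chain2[of f])
  have e: "deriv (\<lambda>x. f (c * x + d)) = (\<lambda>x. c * deriv f (c * x + d))"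
    using d DERIV_imp_deriv by (metis mult.commute)
  have "Cn n (\<lambda>x. c * deriv f (c * x + d))"
    using Suc Cn_cmult by auto
  then show ?case using d e by (auto simp: mult.commute)
qed

definition tp :: "nat \<Rightarrow> real \<Rightarrow> real" where "tp N x = (max 0 x) ^ N"

lemma tp_deriv:
  assumes "N \<ge> 2"
  shows "(tp N has_real_derivative (real N * tp (N - 1) x)) (at x)"
proof -
  consider "x < 0" | "x > 0" | "x = 0" by linarith
  then show ?thesis
  proof cases
    case 1
    have "((\<lambda>_. 0::real) has_real_derivative 0) (at x)" by simp
    then have "(tp N has_real_derivative 0) (at x)"
      by (rule has_field_derivative_transform_within_open[of _ _ _ "{..<0}"])
         (use 1 assms in \<open>auto simp: tp_def\<close>)
    then show ?thesis using 1 assms by (simp add: tp_def power_0_left)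
  next
    case 2
    have "((\<lambda>x. x ^ N) has_real_derivative real N * x ^ (N - 1)) (at x)"
      by (auto intro!: derivative_eq_intros)
    then have "(tp N has_real_derivative real N * x ^ (N - 1)) (at x)"
      by (rule has_field_derivative_transform_within_open[of _ _ _ "{0<..}"])
         (use 2 in \<open>auto simp: tp_def\<close>)
    then show ?thesis using 2 by (simp add: tp_def)
  next
    case 3
    have lim: "((\<lambda>y. tp (N - 1) y) \<longlongrightarrow> tp (N - 1) 0) (at 0)"
      unfolding tp_def by (intro tendsto_intros)
    have "tp (N - 1) 0 = 0" using assms by (simp add: tp_def)
    have eq: "\<And>y. y \<noteq> 0 \<Longrightarrow> (tp N y - tp N 0) / (y - 0) = tp (N - 1) y"
    proof -
      fix y :: real assume "y \<noteq> 0"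
      show "(tp N y - tp N 0) / (y - 0) = tp (N - 1) y"
      proof (cases "y > 0")
        case True
        have "y ^ N = y * y ^ (N - 1)" using assms by (metis Suc_diff_1 not_numeral_le_zero not_gr0 power_Suc)
        then show ?thesis using True \<open>y \<noteq> 0\<close> assms by (simp add: tp_def power_0_left)
      next
        case False then show ?thesis using assms by (simp add: tp_def max_def)
      qed
    qed
    have "((\<lambda>y. (tp N y - tp N 0) / (y - 0)) \<longlongrightarrow> 0) (at 0)"
    proof -
      have ev: "\<forall>\<^sub>F y in at 0. (tp N y - tp N 0) / (y - 0) = tp (N - 1) y"
        unfolding eventually_at_filter using eq by (auto intro: always_eventually)
      show ?thesis using lim \<open>tp (N - 1) 0 = 0\<close> tendsto_cong[OF ev] by simp
    qed
    then have "(tp N has_real_derivative 0) (at 0)"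
      by (simp add: DERIV_def)
    then show ?thesis using 3 \<open>tp (N - 1) 0 = 0\<close> by simp
  qed
qed

lemma Cn_tp: "n < N \<Longrightarrow> Cn n (tp N)"
proof (induction n arbitrary: N)
  case 0 then show ?case unfolding tp_def by (auto intro!: continuous_intros)
next
  case (Suc n)
  then have N2: "N \<ge> 2" by linarith
  have e: "deriv (tp N) = (\<lambda>x. real N * tp (N - 1) x)"
    using tp_deriv[OF N2] DERIV_imp_deriv by blast
  have "Cn n (\<lambda>x. real N * tp (N - 1) x)"
    using Suc Cn_cmult by auto
  then show ?case using e tp_deriv[OF N2] by simp
qed

lemma Cn_iter: "Cn n f \<Longrightarrow> m \<le> n \<Longrightarrow> Cn (n - m) ((deriv ^^ m) f)"
proof (induction m)
  case 0 then show ?case by simp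
next
  case (Suc m)
  then have "Cn (Suc (n - Suc m)) ((deriv ^^ m) f)"
    by (metis Suc_diff_le Suc_leD diff_Suc_Suc)
  then show ?case by simp
qed

lemma zero_out_deriv:
  fixes f :: "real \<Rightarrow> real"
  assumes "\<forall>x. x \<notin> {a..b} \<longrightarrow> f x = (0::real)" "x \<notin> {a..b}"
  shows "deriv f x = 0"
proof -
  have "x < a \<or> x > b" using assms(2) by auto
  then have "(f has_real_derivative 0) (at x)"
  proof
    assume "x < a"
    show ?thesis
      by (rule has_field_derivative_transform_within_open[of "\<lambda>_. 0" _ _ "{..<a}"])
         (use \<open>x < a\<close> assms(1) in auto)
  next
    assume "x > b"
    show ?thesis
      by (rule has_field_derivative_transform_within_open[of "\<lambda>_. 0" _ _ "{b<..}"])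
         (use \<open>x > b\<close> assms(1) in auto)
  qed
  then show ?thesis by (rule DERIV_imp_deriv)
qed

lemma zero_out_iter:
  fixes f :: "real \<Rightarrow> real"
  assumes "\<forall>x. x \<notin> {a..b} \<longrightarrow> f x = (0::real)"
  shows "\<forall>x. x \<notin> {a..b} \<longrightarrow> (deriv ^^ m) f x = 0"
proof (induction m)
  case 0 then show ?case using assms by simp
next
  case (Suc m) then show ?case using zero_out_deriv by simp
qed

lemma cont_zero_out_bounded:
  fixes f :: "real \<Rightarrow> real"
  assumes "continuous_on UNIV f" "\<forall>x. x \<notin> {a..b} \<longrightarrow> f x = (0::real)"
  shows "\<exists>B>0. \<forall>x. \<bar>f x\<bar> \<le> B"
proof -
  have "compact (f ` {a..b})"
    by (rule compact_continuous_image) (use assms(1) continuous_on_subset compact_Icc in auto)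
  then have "bounded (f ` {a..b})" by (rule compact_imp_bounded)
  then obtain B where B: "\<forall>y\<in>f ` {a..b}. norm y \<le> B" by (auto simp: bounded_iff)
  have "\<forall>x. \<bar>f x\<bar> \<le> max B 1"
  proof
    fix x show "\<bar>f x\<bar> \<le> max B 1"
      using B assms(2) by (cases "x \<in> {a..b}") force+
  qed
  then show ?thesis by (intro exI[of _ "max B 1"]) auto
qed

definition bump :: "nat \<Rightarrow> real \<Rightarrow> real" where
  "bump k x = tp (Suc k) (x - 1/4) * tp (Suc k) (3/4 - x)"

definition eta :: "nat \<Rightarrow> nat \<Rightarrow> real \<Rightarrow> real" where
  "eta k m = (deriv ^^ m) (bump k)"

lemma Cn_bump: "Cn k (bump k)"
proof -
  have a: "Cn k (\<lambda>x. tp (Suc k) (1 * x + - (1/4)))"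
    by (rule Cn_affine) (rule Cn_tp, simp)
  have b: "Cn k (\<lambda>x. tp (Suc k) ((-1) * x + 3/4))"
    by (rule Cn_affine) (rule Cn_tp, simp)
  have "Cn k (\<lambda>x. tp (Suc k) (1 * x + - (1/4)) * tp (Suc k) ((-1) * x + 3/4))"
    using Cn_mult[OF a b] .
  moreover have "(\<lambda>x. tp (Suc k) (1 * x + - (1/4)) * tp (Suc k) ((-1) * x + 3/4)) = bump k"
    by (auto simp: bump_def)
  ultimately show ?thesis by simp
qed

lemma eta_Cn: "m \<le> k \<Longrightarrow> Cn (k - m) (eta k m)"
  unfolding eta_def using Cn_iter[OF Cn_bump] by blast

lemma eta_deriv: "m < k \<Longrightarrow> (eta k m has_real_derivative eta k (Suc m) x) (at x)"
proof -
  assume "m < k"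
  then have "Cn (Suc (k - Suc m)) (eta k m)" using eta_Cn[of m k]
    by (metis Suc_diff_Suc less_imp_le_nat)
  then show ?thesis by (simp add: eta_def)
qed

lemma eta_cont: "m \<le> k \<Longrightarrow> continuous_on UNIV (eta k m)"
  using eta_Cn Cn_cont by blast

lemma bump_zero: "\<forall>x. x \<notin> {1/4..3/4} \<longrightarrow> bump k x = 0"
  by (auto simp: bump_def tp_def)

lemma eta_zero: "\<forall>x. x \<notin> {1/4..3/4} \<longrightarrow> eta k m x = 0"
  unfolding eta_def by (rule zero_out_iter[OF bump_zero])

lemma eta_bounded: "\<exists>K>0. \<forall>m\<le>k. \<forall>x. \<bar>eta k m x\<bar> \<le> K"
proof -
  have "n \<le> k \<Longrightarrow> \<exists>K>0. \<forall>m\<le>n. \<forall>x. \<bar>eta k m x\<bar> \<le> K" for n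
  proof (induction n)
    case 0
    then show ?case using cont_zero_out_bounded[OF eta_cont eta_zero, of 0 k] by auto
  next
    case (Suc n)
    then obtain K where K: "K > 0" "\<forall>m\<le>n. \<forall>x. \<bar>eta k m x\<bar> \<le> K" by auto
    obtain B where B: "B > 0" "\<forall>x. \<bar>eta k (Suc n) x\<bar> \<le> B"
      using cont_zero_out_bounded[OF eta_cont eta_zero, of "Suc n" k] Suc.prems by auto
    have "\<forall>m\<le>Suc n. \<forall>x. \<bar>eta k m x\<bar> \<le> max K B"
      using K B by (metis le_Suc_eq max.coboundedI1 max.coboundedI2)
    then show ?case using K by (intro exI[of _ "max K B"]) auto
  qed
  then show ?thesis by blast
qed

lemma bump_nonneg: "bump k x \<ge> 0"
  by (auto simp: bump_def tp_def)

lemma bump_int_pos: "integral {0..1} (bump k) > 0"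
proof -
  have c: "continuous_on {0..1} (bump k)"
    using eta_cont[of 0 k] by (auto simp: eta_def intro: continuous_on_subset)
  have "integral {0..1} (bump k) \<ge> 0"
    by (rule integral_nonneg) (use c integrable_continuous_real bump_nonneg in auto)
  moreover have "integral {0..1} (bump k) \<noteq> 0"
  proof
    assume "integral {0..1} (bump k) = 0"
    then have "\<forall>x\<in>{0..1}. bump k x = 0"
      using integral_eq_0_iff[OF c] bump_nonneg by auto
    moreover have "bump k (1/2) > 0" by (simp add: bump_def tp_def)
    ultimately show False by auto
  qed
  ultimately show ?thesis by linarith
qed

lemma test_props:
  assumes "\<phi> \<in> test_fns"
  shows "\<forall>x. (\<phi> has_real_derivative deriv \<phi> x) (at x)" "continuous_on UNIV (deriv \<phi>)"
    "continuous_on UNIV \<phi>" "\<forall>x. \<bar>\<phi> x\<bar> \<le> 1"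
    "\<exists>a b. 0 < a \<and> a \<le> b \<and> b < 1 \<and> (\<forall>x. x \<notin> {a..b} \<longrightarrow> \<phi> x = 0)"
proof -
  obtain D where D: "\<forall>x. (\<phi> has_vector_derivative D x) (at x)" "continuous_on UNIV D"
    using assms unfolding test_fns_def C1_differentiable_on_def by auto
  have d: "\<forall>x. (\<phi> has_real_derivative D x) (at x)"
    using D(1) has_real_derivative_iff_has_vector_derivative by blast
  then have "deriv \<phi> = D" using DERIV_imp_deriv by blast
  then show "\<forall>x. (\<phi> has_real_derivative deriv \<phi> x) (at x)" "continuous_on UNIV (deriv \<phi>)"
    using d D(2) by auto
  show "continuous_on UNIV \<phi>" using d by (meson DERIV_isCont continuous_at_imp_continuous_on)
  show "\<forall>x. \<bar>\<phi> x\<bar> \<le> 1" "\<exists>a b. 0 < a \<and> a \<le> b \<and> b < 1 \<and> (\<forall>x. x \<notin> {a..b} \<longrightarrow> \<phi> x = 0)"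
    using assms unfolding test_fns_def by auto
qed

definition tlike :: "(real \<Rightarrow> real) \<Rightarrow> (real \<Rightarrow> real) \<Rightarrow> real \<Rightarrow> bool" where
  "tlike f f' M \<longleftrightarrow> (\<forall>x. (f has_real_derivative f' x) (at x)) \<and> continuous_on UNIV f' \<and>
     (\<exists>a b. 0 < a \<and> a \<le> b \<and> b < 1 \<and> (\<forall>x. x \<notin> {a..b} \<longrightarrow> f x = 0)) \<and>
     (\<forall>x. \<bar>f x\<bar> \<le> M) \<and> M > 0"

lemma tlike_scaled:
  assumes "tlike f f' M"
  shows "(\<lambda>x. f x / M) \<in> test_fns" "deriv (\<lambda>x. f x / M) = (\<lambda>x. f' x / M)"
proof -
  have d0: "\<forall>x. (f has_real_derivative f' x) (at x)" and c0: "continuous_on UNIV f'"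
    and b: "\<forall>x. \<bar>f x\<bar> \<le> M" and M: "M > 0"
    using assms unfolding tlike_def by auto
  have d: "\<forall>x. ((\<lambda>x. f x / M) has_real_derivative f' x / M) (at x)"
    using d0 DERIV_cdivide by blast
  then show "deriv (\<lambda>x. f x / M) = (\<lambda>x. f' x / M)" using DERIV_imp_deriv by blast
  have c: "continuous_on UNIV (\<lambda>x. f' x / M)"
    using c0 by (intro continuous_on_divide continuous_on_const) (use M in auto)
  have "\<forall>x\<in>UNIV. ((\<lambda>x. f x / M) has_vector_derivative f' x / M) (at x)"
    using d has_real_derivative_iff_has_vector_derivative by blast
  then have "(\<lambda>x. f x / M) C1_differentiable_on UNIV"
    unfolding C1_differentiable_on_def using c by (intro exI[of _ "\<lambda>x. f' x / M"]) simp
  moreover have "\<forall>x. \<bar>f x / M\<bar> \<le> 1"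
  proof
    fix x
    show "\<bar>f x / M\<bar> \<le> 1" using b M by (simp add: abs_divide)
  qed
  moreover have "\<exists>a b. 0 < a \<and> a \<le> b \<and> b < 1 \<and> (\<forall>x. x \<notin> {a..b} \<longrightarrow> f x / M = 0)"
  proof -
    obtain a b where "0 < a \<and> a \<le> b \<and> b < 1 \<and> (\<forall>x. x \<notin> {a..b} \<longrightarrow> f x = 0)"
      using assms unfolding tlike_def by auto
    then show ?thesis by (intro exI[of _ a] exI[of _ b]) auto
  qed
  ultimately show "(\<lambda>x. f x / M) \<in> test_fns" unfolding test_fns_def by blast
qed

lemma tlike_neg:
  assumes "tlike f f' M" shows "tlike (\<lambda>x. - f x) (\<lambda>x. - f' x) M"
proof -
  have d: "\<forall>x. (f has_real_derivative f' x) (at x)" and c: "continuous_on UNIV f'"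
    and b: "\<forall>x. \<bar>f x\<bar> \<le> M" and M: "M > 0"
    using assms unfolding tlike_def by auto
  obtain a b where ab: "0 < a" "a \<le> b" "b < 1" "\<forall>x. x \<notin> {a..b} \<longrightarrow> f x = 0"
    using assms unfolding tlike_def by auto
  have "\<forall>x. ((\<lambda>x. - f x) has_real_derivative - f' x) (at x)" using d DERIV_minus by blast
  moreover have "continuous_on UNIV (\<lambda>x. - f' x)" using c by (rule continuous_on_minus)
  moreover have "\<exists>a b. 0 < a \<and> a \<le> b \<and> b < 1 \<and> (\<forall>x. x \<notin> {a..b} \<longrightarrow> - f x = 0)"
    using ab by (intro exI[of _ a] exI[of _ b]) auto
  ultimately show ?thesis unfolding tlike_def using b M by auto
qed

lemma dtv_ge:
  assumes "tlike f f' M" "dtv w v \<le> ereal d"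
  shows "- (LINT x:I01|lborel. w x * f' x) - (LINT x:I01|lborel. v x * f x) \<le> M * d"
proof -
  let ?\<phi> = "\<lambda>x. f x / M"
  have "ereal (- (LINT x:I01|lborel. w x * deriv ?\<phi> x) - (LINT x:I01|lborel. v x * ?\<phi> x)) \<le> dtv w v"
    unfolding dtv_def by (rule SUP_upper) (rule tlike_scaled(1)[OF assms(1)])
  also have "\<dots> \<le> ereal d" by fact
  finally have "- (LINT x:I01|lborel. w x * (f' x / M)) - (LINT x:I01|lborel. v x * (f x / M)) \<le> d"
    using tlike_scaled(2)[OF assms(1)] by simp
  then have "(- (LINT x:I01|lborel. w x * f' x) - (LINT x:I01|lborel. v x * f x)) / M \<le> d"
    by (simp add: diff_divide_distrib)
  moreover have "M > 0" using assms(1) unfolding tlike_def by auto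
  ultimately show ?thesis by (simp add: divide_le_eq mult.commute)
qed

lemma dtv_nonneg: "dtv w v \<ge> 0"
proof -
  have "(\<lambda>_. 0) \<in> test_fns" unfolding test_fns_def by (auto intro!: exI[of _ "1/2"])
  then have "ereal (- (LINT x:I01|lborel. w x * deriv (\<lambda>_. 0) x) - (LINT x:I01|lborel. v x * 0)) \<le> dtv w v"
    unfolding dtv_def by (rule SUP_upper)
  then show ?thesis by (simp add: zero_ereal_def)
qed

lemma cont_sub: "continuous_on UNIV f \<Longrightarrow> continuous_on S f"
  using continuous_on_subset by blast

lemma int_zero_on:
  fixes g :: "real \<Rightarrow> real"
  assumes "\<forall>t\<in>{p..q}. g t = 0"
  shows "integral {p..q} g = 0"
proof -
  have "integral {p..q} g = integral {p..q} (\<lambda>_. 0::real)"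
    by (rule integral_cong) (use assms in auto)
  then show ?thesis by simp
qed

lemma decomp:
  "\<exists>M>0. \<exists>Cc>0. \<forall>\<phi>\<in>test_fns. \<exists>c \<psi>. \<bar>c\<bar> \<le> Cc \<and> tlike \<psi> (\<lambda>x. \<phi> x - c * bump k x) M"
proof -
  define I where "I = integral {0..1} (bump k)"
  have Ipos: "I > 0" unfolding I_def by (rule bump_int_pos)
  obtain K where K: "K > 0" "\<forall>x. \<bar>bump k x\<bar> \<le> K"
    using eta_bounded[of k] by (auto simp: eta_def)
  define Cc where "Cc = 1 / I"
  define G where "G = 1 + Cc * K"
  have Cc: "Cc > 0" using Ipos by (simp add: Cc_def)
  have G: "G > 0" using Cc K by (simp add: G_def add_pos_pos)
  have bc: "continuous_on UNIV (bump k)" using eta_cont[of 0 k] by (simp add: eta_def)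
  have "\<forall>\<phi>\<in>test_fns. \<exists>c \<psi>. \<bar>c\<bar> \<le> Cc \<and> tlike \<psi> (\<lambda>x. \<phi> x - c * bump k x) (2 * G)"
  proof
    fix \<phi> assume \<phi>: "\<phi> \<in> test_fns"
    note tp = test_props[OF \<phi>]
    obtain a1 b1 where ab1: "0 < a1" "a1 \<le> b1" "b1 < 1" "\<forall>x. x \<notin> {a1..b1} \<longrightarrow> \<phi> x = 0"
      using tp(5) by auto
    define c where "c = integral {0..1} \<phi> / I"
    have "norm (integral {0..1} \<phi>) \<le> 1 * (1 - 0)"
      by (rule integral_bound) (use tp(3,4) cont_sub in auto)
    then have c_le: "\<bar>c\<bar> \<le> Cc" using Ipos by (simp add: c_def Cc_def divide_right_mono abs_divide)
    define g where "g = (\<lambda>t. \<phi> t - c * bump k t)"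
    have gc: "continuous_on UNIV g" unfolding g_def using tp(3) bc by (auto intro!: continuous_intros)
    have gb: "\<bar>g t\<bar> \<le> G" for t
    proof -
      have "\<bar>g t\<bar> \<le> \<bar>\<phi> t\<bar> + \<bar>c\<bar> * \<bar>bump k t\<bar>" unfolding g_def by (simp add: abs_mult[symmetric] abs_triangle_ineq4)
      also have "\<dots> \<le> 1 + Cc * K"
        using tp(4) c_le K by (intro add_mono mult_mono) auto
      finally show ?thesis by (simp add: G_def)
    qed
    define a3 where "a3 = min a1 (1/4)"
    define b3 where "b3 = max b1 (3/4)"
    have gz: "\<forall>t. t \<notin> {a3..b3} \<longrightarrow> g t = 0"
    proof (intro allI impI)
      fix t assume "t \<notin> {a3..b3}"
      then have "t \<notin> {a1..b1}" "t \<notin> {1/4..3/4}" unfolding a3_def b3_def by auto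
      then show "g t = 0" using ab1(4) bump_zero[of k] unfolding g_def by simp
    qed
    have a3: "0 < a3" "a3 \<le> b3" "b3 < 1" using ab1 by (auto simp: a3_def b3_def)
    have gi: "g integrable_on {p..q}" for p q
      using gc cont_sub integrable_continuous_interval by blast
    have "integral {0..1} g = integral {0..1} \<phi> - c * I"
    proof -
      have i1: "\<phi> integrable_on {0..1}"
        by (rule integrable_continuous_interval[OF cont_sub[OF tp(3)]])
      have i2: "(\<lambda>t. c * bump k t) integrable_on {0..1}"
        by (rule integrable_continuous_interval) (intro continuous_intros cont_sub[OF bc])
      have "integral {0..1} g = integral {0..1} \<phi> - integral {0..1} (\<lambda>t. c * bump k t)"
        unfolding g_def by (rule integral_diff[OF i1 i2])
      then show ?thesis unfolding I_def by simp
    qed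
    then have i01: "integral {0..1} g = 0" using Ipos by (simp add: c_def)
    have "integral {-1..0} g = 0" by (rule int_zero_on) (use gz a3 in auto)
    then have im11: "integral {-1..1} g = 0"
      using Henstock_Kurzweil_Integration.integral_combine[where f=g and a="-1" and c=0 and b=1] gi i01 by simp
    define \<psi> where "\<psi> = (\<lambda>x. integral {-1..x} g)"
    have \<psi>z: "\<forall>x. x \<notin> {a3..b3} \<longrightarrow> \<psi> x = 0"
    proof (intro allI impI)
      fix x assume "x \<notin> {a3..b3}"
      then consider "x < a3" | "x > b3" by auto
      then show "\<psi> x = 0"
      proof cases
        case 1
        show ?thesis unfolding \<psi>_def by (rule int_zero_on) (use gz 1 in auto)
      next
        case 2
        show ?thesis
        proof (cases "x \<ge> 1")
          case True
          have "integral {1..x} g = 0" by (rule int_zero_on) (use gz a3 True in auto)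
          then show ?thesis unfolding \<psi>_def
            using Henstock_Kurzweil_Integration.integral_combine[where f=g and a="-1" and c=1 and b=x] gi im11 True by simp
        next
          case False
          have "integral {x..1} g = 0" by (rule int_zero_on) (use gz 2 in auto)
          moreover have "-1 \<le> x" using 2 a3 by linarith
          ultimately show ?thesis unfolding \<psi>_def
            using Henstock_Kurzweil_Integration.integral_combine[where f=g and a="-1" and c=x and b=1] gi im11 False by simp
        qed
      qed
    qed
    have \<psi>d: "(\<psi> has_real_derivative g x) (at x)" for x
    proof (cases "x > -1")
      case True
      define R where "R = max x 1 + 1"
      have "(\<psi> has_vector_derivative g x) (at x within {-1..R})"
        unfolding \<psi>_def
        by (rule integral_has_vector_derivative) (use gc cont_sub True in \<open>auto simp: R_def\<close>)
      moreover have "at x within {-1..R} = at x"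
        by (rule at_within_Icc_at) (use True in \<open>auto simp: R_def\<close>)
      ultimately show ?thesis by (simp add: has_real_derivative_iff_has_vector_derivative)
    next
      case False
      then have "x < a3" using a3 by linarith
      have "((\<lambda>_. 0) has_real_derivative 0) (at x)" by simp
      then have "(\<psi> has_real_derivative 0) (at x)"
        by (rule has_field_derivative_transform_within_open[of _ _ _ "{..<a3}"])
           (use \<open>x < a3\<close> \<psi>z in auto)
      moreover have "g x = 0" using gz \<open>x < a3\<close> by auto
      ultimately show ?thesis by simp
    qed
    have \<psi>b: "\<bar>\<psi> x\<bar> \<le> 2 * G" for x
    proof (cases "x \<in> {a3..b3}")
      case False then show ?thesis using \<psi>z G by simp
    next
      case True
      have "norm (integral {-1..x} g) \<le> G * (x - -1)"
        by (rule integral_bound) (use True a3 gc cont_sub gb in auto)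
      moreover have "G * (x - -1) \<le> G * 2" using True a3 G by (intro mult_left_mono) auto
      ultimately show ?thesis unfolding \<psi>_def by simp
    qed
    have "tlike \<psi> g (2 * G)"
    proof -
      have "\<exists>a b. 0 < a \<and> a \<le> b \<and> b < 1 \<and> (\<forall>x. x \<notin> {a..b} \<longrightarrow> \<psi> x = 0)"
        using \<psi>z a3 by (intro exI[of _ a3] exI[of _ b3]) auto
      then show ?thesis unfolding tlike_def using \<psi>d gc \<psi>b G by auto
    qed
    then show "\<exists>c \<psi>. \<bar>c\<bar> \<le> Cc \<and> tlike \<psi> (\<lambda>x. \<phi> x - c * bump k x) (2 * G)"
      using c_le unfolding g_def by blast
  qed
  then show ?thesis using G Cc by (intro exI[of _ "2 * G"]) auto
qed

lemma L1_meas: "L1_on w \<Longrightarrow> (\<lambda>x. indicator I01 x *\<^sub>R w x) \<in> borel_measurable lborel"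
  unfolding L1_on_def set_integrable_def by (rule borel_measurable_integrable)

lemma int_mult:
  assumes "L1_on w" "continuous_on UNIV f" "\<forall>x. \<bar>f x\<bar> \<le> K"
  shows "set_integrable lborel I01 (\<lambda>x. w x * f x)"
proof -
  have K: "K \<ge> 0" using assms(3) by (meson abs_ge_zero order.trans)
  have i: "set_integrable lborel I01 (\<lambda>x. K * w x)"
    using assms(1) unfolding L1_on_def by simp
  have fm: "f \<in> borel_measurable lborel"
    using borel_measurable_continuous_onI[OF assms(2)] by simp
  have "(\<lambda>x. (indicator I01 x *\<^sub>R w x) * f x) \<in> borel_measurable lborel"
    using L1_meas[OF assms(1)] fm by measurable
  moreover have "(\<lambda>x. indicator I01 x *\<^sub>R (w x * f x)) = (\<lambda>x. (indicator I01 x *\<^sub>R w x) * f x)"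
    by auto
  ultimately have m: "set_borel_measurable lborel I01 (\<lambda>x. w x * f x)"
    unfolding set_borel_measurable_def by simp
  have "AE x in lborel. x \<in> I01 \<longrightarrow> norm (w x * f x) \<le> norm (K * w x)"
  proof (rule AE_I2, rule impI)
    fix x
    have "\<bar>w x\<bar> * \<bar>f x\<bar> \<le> \<bar>w x\<bar> * K" using assms(3) by (simp add: mult_left_mono)
    then show "norm (w x * f x) \<le> norm (K * w x)" using K by (simp add: abs_mult mult.commute)
  qed
  then show ?thesis by (rule set_integrable_bound[OF i m])
qed

lemma int_mult_bound:
  assumes "L1_on w" "continuous_on UNIV f" "\<forall>x. \<bar>f x\<bar> \<le> K"
  shows "\<bar>LINT x:I01|lborel. w x * f x\<bar> \<le> K * L1_norm w"
proof -
  have K: "K \<ge> 0" using assms(3) by (meson abs_ge_zero order.trans)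
  have "\<bar>LINT x:I01|lborel. w x * f x\<bar> \<le> (LINT x:I01|lborel. norm (w x * f x))"
    using set_integral_norm_bound[OF int_mult[OF assms]] by simp
  also have "\<dots> \<le> (LINT x:I01|lborel. K * \<bar>w x\<bar>)"
  proof (rule set_integral_mono)
    show "set_integrable lborel I01 (\<lambda>x. norm (w x * f x))"
      using set_integrable_abs[OF int_mult[OF assms]] by simp
    show "set_integrable lborel I01 (\<lambda>x. K * \<bar>w x\<bar>)"
      using set_integrable_abs[of lborel I01 w] assms(1) unfolding L1_on_def by simp
    fix x show "norm (w x * f x) \<le> K * \<bar>w x\<bar>"
    proof -
      have "\<bar>w x\<bar> * \<bar>f x\<bar> \<le> \<bar>w x\<bar> * K" using assms(3) by (simp add: mult_left_mono)
      then show ?thesis by (simp add: abs_mult mult.commute)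
    qed
  qed
  also have "\<dots> = K * L1_norm w" by (simp add: L1_norm_def)
  finally show ?thesis .
qed

lemma L1_norm_nonneg: "L1_norm w \<ge> 0"
  unfolding L1_norm_def set_lebesgue_integral_def
  by (rule integral_nonneg_AE) (auto simp: indicator_def)

lemma LINT_neg: "(LINT x:A|M. (w x::real) * - f x) = - (LINT x:A|M. w x * f x)"
  by (simp add: set_lebesgue_integral_def)

lemma LINT_div: "(LINT x:A|M. (w x::real) * (f x / c)) = (LINT x:A|M. w x * f x) / c"
  by (simp add: set_lebesgue_integral_def)

lemma eta0: "eta k 0 = bump k" by (simp add: eta_def)

fun Qf :: "real \<Rightarrow> real \<Rightarrow> real \<Rightarrow> nat \<Rightarrow> nat \<Rightarrow> real" where
  "Qf M Cc K k 0 = 1"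
| "Qf M Cc K k (Suc n) = M * (1 + Qf M Cc K k n) + Cc * K * real (Suc k)"

lemma Qf_pos: "M > 0 \<Longrightarrow> Cc > 0 \<Longrightarrow> K > 0 \<Longrightarrow> Qf M Cc K k n > 0"
proof (induction n)
  case 0 then show ?case by simp
next
  case (Suc n)
  have "M * (1 + Qf M Cc K k n) > 0" using Suc by simp
  moreover have "Cc * K * real (Suc k) > 0" using Suc.prems by (intro mult_pos_pos) auto
  ultimately show ?case by simp
qed

context
  fixes k :: nat and w :: "nat \<Rightarrow> real \<Rightarrow> real" and d :: "nat \<Rightarrow> real" and B :: real
  assumes k: "k \<ge> 1" and L1: "\<forall>i\<le>k. L1_on (w i)"
    and D: "\<forall>i<k. dtv (w i) (w (Suc i)) \<le> ereal (d i)"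
    and top: "\<forall>\<phi>\<in>test_fns. \<bar>LINT x:I01|lborel. w k x * \<phi> x\<bar> \<le> B"
begin

lemma d_nonneg: "i < k \<Longrightarrow> d i \<ge> 0"
  using D dtv_nonneg[of "w i" "w (Suc i)"] by (metis ereal_less_eq(5) order_trans)

lemma d_le_sum: "i < k \<Longrightarrow> d i \<le> sum d {..<k}"
  by (rule member_le_sum) (use d_nonneg in auto)

lemma sum_nonneg': "sum d {..<k} \<ge> 0"
  by (rule sum_nonneg) (use d_nonneg in auto)

lemma B_nonneg: "B \<ge> 0"
proof -
  have "(\<lambda>_. 0) \<in> test_fns" unfolding test_fns_def by (auto intro!: exI[of _ "1/2"])
  then show ?thesis using top by fastforce
qed

lemma stepA:
  fixes K :: real
  assumes K: "K > 0" "\<forall>m\<le>k. \<forall>x. \<bar>eta k m x\<bar> \<le> K"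
  shows "j + m < k \<Longrightarrow> \<bar>LINT x:I01|lborel. w j x * eta k m x\<bar>
            \<le> real (Suc j) * K * (L1_norm (w 0) + sum d {..<k})"
proof (induction j arbitrary: m)
  case 0
  have "\<bar>LINT x:I01|lborel. w 0 x * eta k m x\<bar> \<le> K * L1_norm (w 0)"
    by (rule int_mult_bound) (use L1 eta_cont K 0 in auto)
  also have "\<dots> \<le> K * (L1_norm (w 0) + sum d {..<k})"
    using K sum_nonneg' by (intro mult_left_mono) auto
  finally show ?case by simp
next
  case (Suc j)
  have mk: "m < k" "Suc m \<le> k" "j < k" "Suc j \<le> k" using Suc.prems by auto
  have tl: "tlike (eta k m) (eta k (Suc m)) K"
    unfolding tlike_def
  proof (intro conjI)
    show "\<forall>x. (eta k m has_real_derivative eta k (Suc m) x) (at x)" using eta_deriv mk by blast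
    show "continuous_on UNIV (eta k (Suc m))" using eta_cont mk by blast
    show "\<exists>a b. 0 < a \<and> a \<le> b \<and> b < 1 \<and> (\<forall>x. x \<notin> {a..b} \<longrightarrow> eta k m x = 0)"
      using eta_zero[of k m] by (intro exI[of _ "1/4"] exI[of _ "3/4"]) auto
    show "\<forall>x. \<bar>eta k m x\<bar> \<le> K" using K mk by auto
    show "K > 0" by fact
  qed
  have dj: "dtv (w j) (w (Suc j)) \<le> ereal (d j)" using D mk by auto
  have a: "- (LINT x:I01|lborel. w j x * eta k (Suc m) x) - (LINT x:I01|lborel. w (Suc j) x * eta k m x) \<le> K * d j"
    by (rule dtv_ge[OF tl dj])
  have b: "- (LINT x:I01|lborel. w j x * - eta k (Suc m) x) - (LINT x:I01|lborel. w (Suc j) x * - eta k m x) \<le> K * d j"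
    by (rule dtv_ge[OF tlike_neg[OF tl] dj])
  have ih: "\<bar>LINT x:I01|lborel. w j x * eta k (Suc m) x\<bar> \<le> real (Suc j) * K * (L1_norm (w 0) + sum d {..<k})"
    using Suc.IH[of "Suc m"] Suc.prems by simp
  have "K * d j \<le> K * (L1_norm (w 0) + sum d {..<k})"
    using K d_le_sum[of j] mk L1_norm_nonneg[of "w 0"] by (intro mult_left_mono) auto
  then show ?case using a b ih unfolding LINT_neg by (simp add: algebra_simps abs_le_iff)
qed

lemma stepB:
  fixes M Cc K :: real
  assumes M: "M > 0" and Cc: "Cc > 0"
    and K: "K > 0" "\<forall>m\<le>k. \<forall>x. \<bar>eta k m x\<bar> \<le> K"
    and dec: "\<forall>\<phi>\<in>test_fns. \<exists>c \<psi>. \<bar>c\<bar> \<le> Cc \<and> tlike \<psi> (\<lambda>x. \<phi> x - c * bump k x) M"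
  shows "n < k \<Longrightarrow> \<forall>\<phi>\<in>test_fns. \<bar>LINT x:I01|lborel. w (k - n) x * \<phi> x\<bar>
            \<le> Qf M Cc K k n * (L1_norm (w 0) + sum d {..<k} + B)"
proof (induction n)
  case 0
  have "B \<le> L1_norm (w 0) + sum d {..<k} + B" using L1_norm_nonneg[of "w 0"] sum_nonneg' by linarith
  then show ?case using top by (auto intro: order_trans)
next
  case (Suc n)
  define j where "j = k - Suc n"
  have j: "j < k" "Suc j = k - n" "1 \<le> j" using Suc.prems by (auto simp: j_def)
  define X where "X = L1_norm (w 0) + sum d {..<k} + B"
  define Y where "Y = L1_norm (w 0) + sum d {..<k}"
  have Y: "Y \<ge> 0" "Y \<le> X" using L1_norm_nonneg sum_nonneg' B_nonneg by (auto simp: X_def Y_def)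
  have dX: "d j \<le> X" using d_le_sum[OF j(1)] L1_norm_nonneg[of "w 0"] B_nonneg by (simp add: X_def)
  have IH: "\<forall>\<phi>\<in>test_fns. \<bar>LINT x:I01|lborel. w (Suc j) x * \<phi> x\<bar> \<le> Qf M Cc K k n * X"
    using Suc.IH Suc.prems j(2) by (simp add: X_def)
  have Lj: "L1_on (w j)" using L1 j by auto
  have bc: "continuous_on UNIV (bump k)" using eta_cont[of 0 k] by (simp add: eta0)
  have bK: "\<forall>x. \<bar>bump k x\<bar> \<le> K" using K by (metis eta0 le0)
  show ?case
  proof
    fix \<phi> assume \<phi>: "\<phi> \<in> test_fns"
    note tp = test_props[OF \<phi>]
    obtain c \<psi> where c: "\<bar>c\<bar> \<le> Cc" and tl: "tlike \<psi> (\<lambda>x. \<phi> x - c * bump k x) M"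
      using dec \<phi> by blast
    have dj: "dtv (w j) (w (Suc j)) \<le> ereal (d j)" using D j by auto
    have a: "- (LINT x:I01|lborel. w j x * (\<phi> x - c * bump k x)) - (LINT x:I01|lborel. w (Suc j) x * \<psi> x) \<le> M * d j"
      by (rule dtv_ge[OF tl dj])
    have b: "- (LINT x:I01|lborel. w j x * - (\<phi> x - c * bump k x)) - (LINT x:I01|lborel. w (Suc j) x * - \<psi> x) \<le> M * d j"
      by (rule dtv_ge[OF tlike_neg[OF tl] dj])
    have "\<bar>LINT x:I01|lborel. w (Suc j) x * (\<psi> x / M)\<bar> \<le> Qf M Cc K k n * X"
      using bspec[OF IH tlike_scaled(1)[OF tl]] by simp
    then have c1: "\<bar>LINT x:I01|lborel. w (Suc j) x * \<psi> x\<bar> \<le> M * (Qf M Cc K k n * X)"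
      using M unfolding LINT_div by (simp add: abs_divide divide_le_eq mult.commute)
    have i1: "set_integrable lborel I01 (\<lambda>x. w j x * \<phi> x)"
      by (rule int_mult[OF Lj tp(3) tp(4)])
    have i2: "set_integrable lborel I01 (\<lambda>x. c * (w j x * bump k x))"
      using int_mult[OF Lj bc bK] by simp
    have "(LINT x:I01|lborel. w j x * (\<phi> x - c * bump k x))
        = (LINT x:I01|lborel. w j x * \<phi> x - c * (w j x * bump k x))"
      by (simp add: algebra_simps)
    also have "\<dots> = (LINT x:I01|lborel. w j x * \<phi> x) - c * (LINT x:I01|lborel. w j x * bump k x)"
      using set_integral_diff(2)[OF i1 i2] by simp
    finally have lin: "(LINT x:I01|lborel. w j x * (\<phi> x - c * bump k x))
        = (LINT x:I01|lborel. w j x * \<phi> x) - c * (LINT x:I01|lborel. w j x * bump k x)" .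
    have sA: "\<bar>LINT x:I01|lborel. w j x * bump k x\<bar> \<le> real (Suc j) * K * Y"
      using stepA[OF K, of j 0] j by (simp add: eta0 Y_def)
    have "\<bar>c\<bar> * \<bar>LINT x:I01|lborel. w j x * bump k x\<bar> \<le> Cc * (real (Suc j) * K * Y)"
      using c sA by (intro mult_mono) auto
    also have "\<dots> \<le> Cc * (real (Suc k) * K * X)"
      using Cc K Y j by (intro mult_left_mono mult_mono) auto
    finally have c2: "\<bar>c * (LINT x:I01|lborel. w j x * bump k x)\<bar> \<le> Cc * K * real (Suc k) * X"
      by (simp add: abs_mult algebra_simps)
    have c3: "M * d j \<le> M * X" using M dX by simp
    have "\<bar>LINT x:I01|lborel. w j x * \<phi> x\<bar> \<le> M * X + M * (Qf M Cc K k n * X) + Cc * K * real (Suc k) * X"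
      using a b c1 c2 c3 lin unfolding LINT_neg by (simp add: abs_le_iff algebra_simps)
    also have "\<dots> = Qf M Cc K k (Suc n) * X" by (simp add: algebra_simps)
    finally show "\<bar>LINT x:I01|lborel. w (k - Suc n) x * \<phi> x\<bar> \<le> Qf M Cc K k (Suc n) * (L1_norm (w 0) + sum d {..<k} + B)"
      by (simp add: j_def X_def)
  qed
qed

lemma stepC:
  fixes Q :: real
  assumes "\<forall>\<phi>\<in>test_fns. \<bar>LINT x:I01|lborel. w 1 x * \<phi> x\<bar> \<le> Q * (L1_norm (w 0) + sum d {..<k} + B)"
  shows "dtv (w 0) (\<lambda>_. 0) \<le> ereal ((1 + Q) * (L1_norm (w 0) + sum d {..<k} + B))"
  unfolding dtv_def
proof (rule SUP_least)
  fix \<phi> assume \<phi>: "\<phi> \<in> test_fns"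
  define X where "X = L1_norm (w 0) + sum d {..<k} + B"
  have "ereal (- (LINT x:I01|lborel. w 0 x * deriv \<phi> x) - (LINT x:I01|lborel. w 1 x * \<phi> x)) \<le> dtv (w 0) (w 1)"
    unfolding dtv_def using \<phi> by (intro SUP_upper) auto
  also have "\<dots> \<le> ereal (d 0)" using D k by auto
  finally have a: "- (LINT x:I01|lborel. w 0 x * deriv \<phi> x) - (LINT x:I01|lborel. w 1 x * \<phi> x) \<le> d 0" by simp
  have "d 0 \<le> X" using d_le_sum[of 0] k L1_norm_nonneg[of "w 0"] B_nonneg by (simp add: X_def)
  moreover have e: "\<bar>LINT x:I01|lborel. w 1 x * \<phi> x\<bar> \<le> Q * X"
    using assms \<phi> unfolding X_def by blast
  ultimately have "- (LINT x:I01|lborel. w 0 x * deriv \<phi> x) \<le> X + Q * X"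
    using a by linarith
  then have "- (LINT x:I01|lborel. w 0 x * deriv \<phi> x) \<le> (1 + Q) * X"
    by (simp add: algebra_simps)
  then show "ereal (- (LINT x:I01|lborel. w 0 x * deriv \<phi> x) - (LINT x:I01|lborel. 0 * \<phi> x))
        \<le> ereal ((1 + Q) * (L1_norm (w 0) + sum d {..<k} + B))"
    by (simp add: X_def)
qed

end

lemma core:
  fixes k :: nat assumes k: "k \<ge> 1"
  shows "\<exists>C>0. \<forall>w d B. (\<forall>i\<le>k. L1_on (w i)) \<longrightarrow> (\<forall>i<k. dtv (w i) (w (Suc i)) \<le> ereal (d i)) \<longrightarrow>
     (\<forall>\<phi>\<in>test_fns. \<bar>LINT x:I01|lborel. w k x * \<phi> x\<bar> \<le> B) \<longrightarrow>
     dtv (w 0) (\<lambda>_. 0) \<le> ereal (C * (L1_norm (w 0) + sum d {..<k} + B))"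
proof -
  obtain M Cc where MC: "M > 0" "Cc > 0"
    "\<forall>\<phi>\<in>test_fns. \<exists>c \<psi>. \<bar>c\<bar> \<le> Cc \<and> tlike \<psi> (\<lambda>x. \<phi> x - c * bump k x) M"
    using decomp[of k] by blast
  obtain K where K: "K > 0" "\<forall>m\<le>k. \<forall>x. \<bar>eta k m x\<bar> \<le> K" using eta_bounded[of k] by blast
  define C where "C = 1 + Qf M Cc K k (k - 1)"
  have "C > 0" using Qf_pos[OF MC(1,2) K(1)] by (simp add: C_def add_pos_pos)
  moreover have "dtv (w 0) (\<lambda>_. 0) \<le> ereal (C * (L1_norm (w 0) + sum d {..<k} + B))"
    if h: "\<forall>i\<le>k. L1_on (w i)" "\<forall>i<k. dtv (w i) (w (Suc i)) \<le> ereal (d i)"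
      "\<forall>\<phi>\<in>test_fns. \<bar>LINT x:I01|lborel. w k x * \<phi> x\<bar> \<le> B" for w d B
  proof -
    have "\<forall>\<phi>\<in>test_fns. \<bar>LINT x:I01|lborel. w (k - (k - 1)) x * \<phi> x\<bar>
            \<le> Qf M Cc K k (k - 1) * (L1_norm (w 0) + sum d {..<k} + B)"
      using stepB[OF k h MC(1,2) K MC(3), of "k - 1"] k by simp
    then have "\<forall>\<phi>\<in>test_fns. \<bar>LINT x:I01|lborel. w 1 x * \<phi> x\<bar>
            \<le> Qf M Cc K k (k - 1) * (L1_norm (w 0) + sum d {..<k} + B)"
      using k by simp
    then show ?thesis using stepC[OF k h] by (simp add: C_def)
  qed
  ultimately show ?thesis by blast
qed

lemma I01_sets[measurable]: "I01 \<in> sets lborel"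
  unfolding I01_def by simp

lemma I01_borel[measurable]: "I01 \<in> sets borel"
  unfolding I01_def by simp

lemma I01_emeasure: "emeasure lborel I01 = 1"
  unfolding I01_def by simp

lemma I01_measure: "measure lborel I01 = 1"
  unfolding I01_def by simp

lemma L1_const: "L1_on (\<lambda>_. c)"
  unfolding L1_on_def set_integrable_def
  using I01_emeasure I01_sets by (intro integrable_scaleR_left integrable_real_indicator) auto

lemma LINT_const: "(LINT x:I01|lborel. c) = (c::real)"
  using set_integral_const[of I01 lborel c] I01_emeasure I01_measure I01_sets by simp

lemma L1_norm_one: "L1_norm (\<lambda>_. 1) = 1"
  unfolding L1_norm_def using LINT_const[of 1] by simp

lemma pw1:
  fixes a p :: real assumes "a \<ge> 0" "p \<ge> 1"
  shows "a \<le> a powr p + 1"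
proof (cases "a \<le> 1")
  case True then show ?thesis by (simp add: add_increasing)
next
  case False
  then have "a powr 1 \<le> a powr p" using assms by (intro powr_mono) auto
  then show ?thesis using False by simp
qed

lemma pw2:
  fixes a p t :: real assumes "a \<ge> 0" "p \<ge> 1" "t > 0"
  shows "a \<le> t + t powr (1 - p) * a powr p"
proof (cases "a \<le> t")
  case True then show ?thesis by (simp add: add_increasing2)
next
  case False
  then have a: "a > 0" "a / t \<ge> 1" using assms by auto
  have "(a / t) powr (p - 1) \<ge> 1" using a assms by (intro ge_one_powr_ge_zero) auto
  then have "a \<le> a * (a / t) powr (p - 1)" using a by simp
  also have "a * (a / t) powr (p - 1) = t powr (1 - p) * a powr p"
  proof -
    have "a * (a / t) powr (p - 1) = a * (a powr (p - 1) / t powr (p - 1))"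
      using a assms by (simp add: powr_divide)
    also have "\<dots> = a powr (1 + (p - 1)) / t powr (p - 1)"
    proof -
      have "a powr (1 + (p - 1)) = a powr 1 * a powr (p - 1)" by (rule powr_add)
      then show ?thesis using a by simp
    qed
    also have "\<dots> = t powr (1 - p) * a powr p"
    proof -
      have "t powr (1 - p) = inverse (t powr (p - 1))"
        using powr_minus[of t "p - 1"] by simp
      then show ?thesis by (simp add: divide_inverse)
    qed
    finally show ?thesis .
  qed
  finally show ?thesis using assms by simp
qed

lemma Wsp_L1:
  assumes p: "p > 1" and W: "in_Wsp s p v"
  shows "L1_on v"
proof -
  have vm[measurable]: "v \<in> borel_measurable lborel" using W by (simp add: in_Wsp_def)
  have fin: "(\<integral>\<^sup>+x\<in>I01. ennreal (\<bar>v x\<bar> powr p) \<partial>lborel) < \<infinity>" using W by (simp add: in_Wsp_def)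
  have "(\<integral>\<^sup>+x. ennreal (norm (indicator I01 x *\<^sub>R v x)) \<partial>lborel)
      \<le> (\<integral>\<^sup>+x. ennreal (\<bar>v x\<bar> powr p) * indicator I01 x + indicator I01 x \<partial>lborel)"
  proof (rule nn_integral_mono)
    fix x
    show "ennreal (norm (indicator I01 x *\<^sub>R v x)) \<le> ennreal (\<bar>v x\<bar> powr p) * indicator I01 x + indicator I01 x"
    proof (cases "x \<in> I01")
      case True
      have "\<bar>v x\<bar> \<le> \<bar>v x\<bar> powr p + 1" using pw1[of "\<bar>v x\<bar>" p] p by simp
      then have "ennreal \<bar>v x\<bar> \<le> ennreal (\<bar>v x\<bar> powr p + 1)" by (rule ennreal_leI)
      then show ?thesis using True by (simp add: ennreal_plus)
    next
      case False then show ?thesis by simp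
    qed
  qed
  also have "\<dots> = (\<integral>\<^sup>+x\<in>I01. ennreal (\<bar>v x\<bar> powr p) \<partial>lborel) + (\<integral>\<^sup>+x. indicator I01 x \<partial>lborel)"
    by (rule nn_integral_add) auto
  also have "\<dots> < \<infinity>" using fin I01_emeasure nn_integral_indicator[OF I01_sets] by simp
  finally have "integrable lborel (\<lambda>x. indicator I01 x *\<^sub>R v x)"
    by (intro integrableI_bounded) auto
  then show ?thesis unfolding L1_on_def set_integrable_def .
qed

lemma L1nn:
  assumes "set_integrable lborel I01 f" "\<forall>x. f x \<ge> 0"
  shows "ennreal (LINT x:I01|lborel. f x) = (\<integral>\<^sup>+x\<in>I01. ennreal (f x) \<partial>lborel)"
proof -
  have "(\<integral>\<^sup>+x. ennreal (indicator I01 x *\<^sub>R f x) \<partial>lborel) = (LINT x:I01|lborel. f x)"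
    unfolding set_lebesgue_integral_def
    by (rule nn_integral_eq_integral) (use assms in \<open>auto simp: set_integrable_def indicator_def\<close>)
  moreover have "(\<lambda>x. ennreal (indicator I01 x *\<^sub>R f x)) = (\<lambda>x. ennreal (f x) * indicator I01 x)"
    by (auto simp: indicator_def)
  ultimately show ?thesis by simp
qed

lemma meas_H:
  assumes [measurable]: "v \<in> borel_measurable lborel"
  shows "(\<lambda>x. \<integral>\<^sup>+y. ennreal (\<bar>v x - v y\<bar> powr p / \<bar>x - y\<bar> powr r) * indicator I01 y \<partial>lborel)
          \<in> borel_measurable lborel"
  by measurable

lemma frac_poincare_t:
  assumes p: "p > 1" and s: "s > 0" and W: "in_Wsp s p v" and t: "t > 0"
  shows "L1_norm (\<lambda>x. v x - (LINT y:I01|lborel. v y))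
           \<le> t + t powr (1 - p) * enn2real (gagliardo s p v)"
proof -
  have vm[measurable]: "v \<in> borel_measurable lborel" using W by (simp add: in_Wsp_def)
  have L1v: "L1_on v" using Wsp_L1[OF p W] .
  have vi: "set_integrable lborel I01 v" using L1v by (simp add: L1_on_def)
  define m where "m = (LINT y:I01|lborel. v y)"
  define q where "q = (\<lambda>x y. \<bar>v x - v y\<bar> powr p / \<bar>x - y\<bar> powr (1 + s * p))"
  define H where "H = (\<lambda>x. \<integral>\<^sup>+y. ennreal (q x y) * indicator I01 y \<partial>lborel)"
  have Hm[measurable]: "H \<in> borel_measurable lborel"
    unfolding H_def q_def using meas_H[OF vm] by simp
  have qm[measurable]: "(\<lambda>y. ennreal (q x y) * indicator I01 y) \<in> borel_measurable lborel" for x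
    unfolding q_def by measurable
  have G: "gagliardo s p v = (\<integral>\<^sup>+x. H x * indicator I01 x \<partial>lborel)"
    unfolding gagliardo_def H_def q_def ..
  have Gfin: "gagliardo s p v < \<infinity>" using W by (simp add: in_Wsp_def)
  define Gr where "Gr = enn2real (gagliardo s p v)"
  have GGr: "gagliardo s p v = ennreal Gr" using Gfin by (simp add: Gr_def ennreal_enn2real less_top)
  define T where "T = t powr (1 - p)"
  have T: "T \<ge> 0" by (simp add: T_def)
  have ci: "set_integrable lborel I01 (\<lambda>_. c)" for c :: real using L1_const[of c] by (simp add: L1_on_def)
  have inner: "ennreal \<bar>v x - m\<bar> \<le> ennreal t + ennreal T * H x" if xin: "x \<in> I01" for x
  proof -
    have di: "set_integrable lborel I01 (\<lambda>y. v x - v y)"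
      using set_integral_diff(1)[OF ci vi] .
    have "(LINT y:I01|lborel. v x - v y) = (LINT y:I01|lborel. v x) - m"
      using set_integral_diff(2)[OF ci vi] by (simp add: m_def)
    then have e1: "(LINT y:I01|lborel. v x - v y) = v x - m" by (simp add: LINT_const)
    have "\<bar>v x - m\<bar> \<le> (LINT y:I01|lborel. \<bar>v x - v y\<bar>)"
      using set_integral_norm_bound[OF di] e1 by simp
    then have "ennreal \<bar>v x - m\<bar> \<le> ennreal (LINT y:I01|lborel. \<bar>v x - v y\<bar>)"
      by (rule ennreal_leI)
    also have "\<dots> = (\<integral>\<^sup>+y\<in>I01. ennreal \<bar>v x - v y\<bar> \<partial>lborel)"
      by (rule L1nn) (use set_integrable_abs[OF di] in auto)
    also have "\<dots> \<le> (\<integral>\<^sup>+y. ennreal t * indicator I01 y + ennreal T * (ennreal (q x y) * indicator I01 y) \<partial>lborel)"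
    proof (rule nn_integral_mono)
      fix y
      show "ennreal \<bar>v x - v y\<bar> * indicator I01 y
          \<le> ennreal t * indicator I01 y + ennreal T * (ennreal (q x y) * indicator I01 y)"
      proof (cases "y \<in> I01")
        case False then show ?thesis by simp
      next
        case True
        have q0: "q x y \<ge> 0" by (simp add: q_def)
        have "\<bar>v x - v y\<bar> \<le> t + T * q x y"
        proof (cases "x = y")
          case True then show ?thesis using t T q0 by simp
        next
          case False
          have r: "\<bar>x - y\<bar> powr (1 + s * p) > 0" using False by simp
          have "\<bar>x - y\<bar> < 1" using xin \<open>y \<in> I01\<close> by (auto simp: I01_def)
          moreover have "1 + s * p > 0" using s p by (simp add: add_pos_pos)
          ultimately have "\<bar>x - y\<bar> powr (1 + s * p) \<le> 1"
            using powr_le1 by force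
          then have "\<bar>v x - v y\<bar> powr p \<le> q x y"
            unfolding q_def using r
            by (simp add: le_divide_eq mult_left_le)
          then have "t + T * \<bar>v x - v y\<bar> powr p \<le> t + T * q x y"
            using T by (simp add: mult_left_mono)
          moreover have "\<bar>v x - v y\<bar> \<le> t + T * \<bar>v x - v y\<bar> powr p"
            unfolding T_def using pw2[of "\<bar>v x - v y\<bar>" p t] p t by simp
          ultimately show ?thesis by linarith
        qed
        then have "ennreal \<bar>v x - v y\<bar> \<le> ennreal (t + T * q x y)" by (rule ennreal_leI)
        then show ?thesis using True t T q0 by (simp add: ennreal_plus ennreal_mult)
      qed
    qed
    also have "\<dots> = (\<integral>\<^sup>+y. ennreal t * indicator I01 y \<partial>lborel)
        + (\<integral>\<^sup>+y. ennreal T * (ennreal (q x y) * indicator I01 y) \<partial>lborel)"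
      by (rule nn_integral_add) (use qm in auto)
    also have "\<dots> = ennreal t + ennreal T * H x"
      using I01_emeasure nn_integral_cmult[OF qm[of x], of "ennreal T"] nn_integral_cmult_indicator[OF I01_sets]
      by (simp add: H_def)
    finally show ?thesis .
  qed
  have L1d: "set_integrable lborel I01 (\<lambda>x. \<bar>v x - m\<bar>)"
    using set_integrable_abs[OF set_integral_diff(1)[OF vi ci]] .
  have "ennreal (L1_norm (\<lambda>x. v x - m)) = (\<integral>\<^sup>+x\<in>I01. ennreal \<bar>v x - m\<bar> \<partial>lborel)"
    unfolding L1_norm_def by (rule L1nn[OF L1d]) auto
  also have "\<dots> \<le> (\<integral>\<^sup>+x. ennreal t * indicator I01 x + ennreal T * (H x * indicator I01 x) \<partial>lborel)"
  proof (rule nn_integral_mono)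
    fix x show "ennreal \<bar>v x - m\<bar> * indicator I01 x \<le> ennreal t * indicator I01 x + ennreal T * (H x * indicator I01 x)"
      using inner[of x] by (cases "x \<in> I01") auto
  qed
  also have "\<dots> = (\<integral>\<^sup>+x. ennreal t * indicator I01 x \<partial>lborel)
        + (\<integral>\<^sup>+x. ennreal T * (H x * indicator I01 x) \<partial>lborel)"
    by (rule nn_integral_add) auto
  also have "\<dots> = ennreal t + ennreal T * gagliardo s p v"
    unfolding G
    using I01_emeasure nn_integral_cmult[of "\<lambda>x. H x * indicator I01 x" lborel "ennreal T"]
      nn_integral_cmult_indicator[OF I01_sets]
    by simp
  also have "\<dots> = ennreal (t + T * Gr)"
    using t T GGr by (simp add: ennreal_plus ennreal_mult enn2real_nonneg Gr_def)
  finally have "L1_norm (\<lambda>x. v x - m) \<le> t + T * Gr"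
    using t T by (subst (asm) ennreal_le_iff) (auto simp: Gr_def)
  then show ?thesis by (simp add: m_def T_def Gr_def)
qed

lemma frac_poincare:
  assumes p: "p > 1" and s: "s > 0" and W: "in_Wsp s p v"
  shows "L1_norm (\<lambda>x. v x - (LINT y:I01|lborel. v y)) \<le> 2 * enn2real (gagliardo s p v) powr (1 / p)"
proof -
  define L where "L = L1_norm (\<lambda>x. v x - (LINT y:I01|lborel. v y))"
  define Gr where "Gr = enn2real (gagliardo s p v)"
  have Gr: "Gr \<ge> 0" by (simp add: Gr_def)
  have main: "\<And>t. t > 0 \<Longrightarrow> L \<le> t + t powr (1 - p) * Gr"
    unfolding L_def Gr_def using frac_poincare_t[OF p s W] by blast
  show ?thesis
  proof (cases "Gr = 0")
    case True
    have "L \<le> 0"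
    proof (rule ccontr)
      assume "\<not> L \<le> 0"
      then have "L \<le> L / 2" using main[of "L / 2"] True by simp
      then show False using \<open>\<not> L \<le> 0\<close> by simp
    qed
    then show ?thesis using True by (simp add: L_def Gr_def)
  next
    case False
    then have Gp: "Gr > 0" using Gr by simp
    define t where "t = Gr powr (1 / p)"
    have t: "t > 0" using Gp by (simp add: t_def)
    have "t powr (1 - p) * Gr = Gr powr (1 / p * (1 - p)) * Gr powr 1"
      using Gp by (simp add: t_def powr_powr)
    also have "\<dots> = Gr powr (1 / p * (1 - p) + 1)" by (simp add: powr_add)
    also have "1 / p * (1 - p) + 1 = 1 / p" using p by (simp add: field_simps)
    finally have "t powr (1 - p) * Gr = t" by (simp add: t_def)
    then have "L \<le> 2 * t" using main[OF t] by simp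
    then show ?thesis by (simp add: L_def t_def Gr_def)
  qed
qed

lemma frac_test:
  assumes p: "p > 1" and s: "s > 0" and W: "in_Wsp s p v" and \<phi>: "\<phi> \<in> test_fns"
  shows "\<bar>LINT x:I01|lborel. v x * \<phi> x\<bar>
           \<le> 2 * enn2real (gagliardo s p v) powr (1 / p) + \<bar>LINT y:I01|lborel. v y\<bar>"
proof -
  define m where "m = (LINT y:I01|lborel. v y)"
  note tp = test_props[OF \<phi>]
  have L1v: "L1_on v" using Wsp_L1[OF p W] .
  have L1d: "L1_on (\<lambda>x. v x - m)"
    using L1v L1_const[of m] unfolding L1_on_def by (rule set_integral_diff(1))
  have i1: "set_integrable lborel I01 (\<lambda>x. (v x - m) * \<phi> x)"
    using int_mult[OF L1d tp(3) tp(4)] .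
  have i2: "set_integrable lborel I01 (\<lambda>x. m * (1 * \<phi> x))"
    using int_mult[OF L1_const[of 1] tp(3) tp(4)] by simp
  have "(LINT x:I01|lborel. v x * \<phi> x) = (LINT x:I01|lborel. (v x - m) * \<phi> x + m * (1 * \<phi> x))"
    by (simp add: algebra_simps)
  also have "\<dots> = (LINT x:I01|lborel. (v x - m) * \<phi> x) + m * (LINT x:I01|lborel. 1 * \<phi> x)"
    using set_integral_add(2)[OF i1 i2] by simp
  finally have e: "(LINT x:I01|lborel. v x * \<phi> x) = (LINT x:I01|lborel. (v x - m) * \<phi> x) + m * (LINT x:I01|lborel. 1 * \<phi> x)" .
  have b1: "\<bar>LINT x:I01|lborel. (v x - m) * \<phi> x\<bar> \<le> 1 * L1_norm (\<lambda>x. v x - m)"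
    by (rule int_mult_bound[OF L1d tp(3) tp(4)])
  have b2: "\<bar>LINT x:I01|lborel. 1 * \<phi> x\<bar> \<le> 1 * L1_norm (\<lambda>_. 1)"
    by (rule int_mult_bound[OF L1_const tp(3) tp(4)])
  then have b2': "\<bar>m * (LINT x:I01|lborel. 1 * \<phi> x)\<bar> \<le> \<bar>m\<bar>"
    by (simp add: L1_norm_one abs_mult mult_left_le)
  have "L1_norm (\<lambda>x. v x - m) \<le> 2 * enn2real (gagliardo s p v) powr (1 / p)"
    using frac_poincare[OF p s W] by (simp add: m_def)
  then show ?thesis using e b1 b2' by (simp add: m_def[symmetric])
qed

lemma ereal_sum_cases:
  fixes T :: "nat \<Rightarrow> ereal"
  assumes b: "\<forall>i<k. \<beta> i > 0" and T: "\<forall>i<k. T i \<ge> 0"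
  shows "(\<Sum>i<k. ereal (\<beta> i) * T i) = \<infinity> \<or>
    (\<exists>d. (\<forall>i<k. T i = ereal (d i) \<and> d i \<ge> 0) \<and> (\<Sum>i<k. ereal (\<beta> i) * T i) = ereal (\<Sum>i<k. \<beta> i * d i))"
proof (cases "\<exists>i<k. T i = \<infinity>")
  case True
  then obtain i where i: "i < k" "T i = \<infinity>" by auto
  then have "ereal (\<beta> i) * T i = \<infinity>" using b i(1) by (simp add: less_imp_neq[symmetric])
  then have "(\<Sum>i<k. ereal (\<beta> i) * T i) = \<infinity>" using i(1) sum_Pinfty[of "\<lambda>i. ereal (\<beta> i) * T i" "{..<k}"] by auto
  then show ?thesis by simp
next
  case False
  define d where "d i = real_of_ereal (T i)" for i
  have Td: "\<forall>i<k. T i = ereal (d i) \<and> d i \<ge> 0"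
  proof (intro allI impI)
    fix i assume "i < k"
    then have "T i \<noteq> \<infinity>" "T i \<ge> 0" using False T by auto
    then show "T i = ereal (d i) \<and> d i \<ge> 0" unfolding d_def
      by (cases "T i") auto
  qed
  have "(\<Sum>i<k. ereal (\<beta> i) * T i) = (\<Sum>i<k. ereal (\<beta> i * d i))"
    by (rule sum.cong) (use Td in auto)
  also have "\<dots> = ereal (\<Sum>i<k. \<beta> i * d i)" by simp
  finally show ?thesis using Td by blast
qed

lemma sum_weighted_ge:
  fixes \<beta> d :: "nat \<Rightarrow> real" and A :: real
  assumes "\<forall>i<k. \<beta> i \<ge> A" "\<forall>i<k. d i \<ge> 0"
  shows "A * (\<Sum>i<k. d i) \<le> (\<Sum>i<k. \<beta> i * d i)"
  unfolding sum_distrib_left by (rule sum_mono) (use assms in \<open>auto intro: mult_right_mono\<close>)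

lemma Min_pos:
  fixes \<beta> :: "nat \<Rightarrow> real"
  assumes "\<forall>i<k. \<beta> i > 0" "k \<ge> 1"
  shows "\<exists>A>0. \<forall>i<k. \<beta> i \<ge> A"
proof -
  define A where "A = Min (\<beta> ` {..<k})"
  have ne: "\<beta> ` {..<k} \<noteq> {}" using assms(2) by (simp add: lessThan_empty_iff)
  have "A > 0" unfolding A_def using assms ne by (subst Min_gr_iff) auto
  moreover have "\<forall>i<k. \<beta> i \<ge> A" unfolding A_def by auto
  ultimately show ?thesis by blast
qed

lemma lower_int:
  fixes k :: nat and \<beta> :: "nat \<Rightarrow> real"
  assumes k: "k \<ge> 1" and b: "\<forall>i<k. \<beta> i > 0"
  shows "\<exists>C>0. \<forall>u v. L1_on u \<longrightarrow> (\<forall>i<k-1. v i \<in> BV_set) \<longrightarrow>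
     dtv u (\<lambda>_. 0) \<le> ereal C * (ereal (L1_norm u) +
        (\<Sum>i<k. ereal (\<beta> i) * dtv (if i = 0 then u else v (i - 1)) (if i = k - 1 then (\<lambda>_. 0) else v i)))"
proof -
  obtain C0 where C0: "C0 > 0" "\<forall>w d B. (\<forall>i\<le>k. L1_on (w i)) \<longrightarrow> (\<forall>i<k. dtv (w i) (w (Suc i)) \<le> ereal (d i)) \<longrightarrow>
     (\<forall>\<phi>\<in>test_fns. \<bar>LINT x:I01|lborel. w k x * \<phi> x\<bar> \<le> B) \<longrightarrow>
     dtv (w 0) (\<lambda>_. 0) \<le> ereal (C0 * (L1_norm (w 0) + sum d {..<k} + B))"
    using core[OF k] by blast
  obtain A where A: "A > 0" "\<forall>i<k. \<beta> i \<ge> A" using Min_pos[OF b k] by blast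
  define C where "C = C0 * max 1 (1 / A)"
  have Cpos: "C > 0" using C0 A by (simp add: C_def)
  have "dtv u (\<lambda>_. 0) \<le> ereal C * (ereal (L1_norm u) +
        (\<Sum>i<k. ereal (\<beta> i) * dtv (if i = 0 then u else v (i - 1)) (if i = k - 1 then (\<lambda>_. 0) else v i)))"
    if u: "L1_on u" and v: "\<forall>i<k-1. v i \<in> BV_set" for u v
  proof -
    define w where "w i = (if i = 0 then u else if i < k then v (i - 1) else (\<lambda>_. 0))" for i :: nat
    have wS: "\<And>i. i < k \<Longrightarrow> w (Suc i) = (if i = k - 1 then (\<lambda>_. 0) else v i)"
      by (auto simp: w_def)
    have w0: "\<And>i. i < k \<Longrightarrow> w i = (if i = 0 then u else v (i - 1))"
      by (auto simp: w_def)
    define T where "T i = dtv (w i) (w (Suc i))" for i :: nat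
    have sumeq: "(\<Sum>i<k. ereal (\<beta> i) * dtv (if i = 0 then u else v (i - 1)) (if i = k - 1 then (\<lambda>_. 0) else v i))
        = (\<Sum>i<k. ereal (\<beta> i) * T i)"
      by (rule sum.cong) (auto simp: T_def wS w0)
    have Tn: "\<forall>i<k. T i \<ge> 0" by (simp add: T_def dtv_nonneg)
    have a0: "L1_norm u \<ge> 0" by (rule L1_norm_nonneg)
    consider "(\<Sum>i<k. ereal (\<beta> i) * T i) = \<infinity>"
      | d where "\<forall>i<k. T i = ereal (d i) \<and> d i \<ge> 0" "(\<Sum>i<k. ereal (\<beta> i) * T i) = ereal (\<Sum>i<k. \<beta> i * d i)"
      using ereal_sum_cases[OF b Tn] by blast
    then show ?thesis
    proof cases
      case 1 then show ?thesis using Cpos unfolding sumeq by simp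
    next
      case 2
      have L1w: "\<forall>i\<le>k. L1_on (w i)"
      proof (intro allI impI)
        fix i assume "i \<le> k"
        show "L1_on (w i)"
          using u v L1_const[of 0] \<open>i \<le> k\<close> by (auto simp: w_def BV_set_def)
      qed
      have top: "\<forall>\<phi>\<in>test_fns. \<bar>LINT x:I01|lborel. w k x * \<phi> x\<bar> \<le> 0"
        using k by (simp add: w_def)
      have Dd: "\<forall>i<k. dtv (w i) (w (Suc i)) \<le> ereal (d i)" using 2(1) by (simp add: T_def)
      have "dtv u (\<lambda>_. 0) \<le> ereal (C0 * (L1_norm u + sum d {..<k} + 0))"
      proof -
        have "dtv (w 0) (\<lambda>_. 0) \<le> ereal (C0 * (L1_norm (w 0) + sum d {..<k} + 0))"
          using C0(2) L1w Dd top by blast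
        then show ?thesis by (simp add: w_def)
      qed
      also have "C0 * (L1_norm u + sum d {..<k} + 0) \<le> C * (L1_norm u + (\<Sum>i<k. \<beta> i * d i))"
      proof -
        have "A * sum d {..<k} \<le> (\<Sum>i<k. \<beta> i * d i)"
          using sum_weighted_ge[where k=k and \<beta>=\<beta> and A=A and d=d] A 2(1) by auto
        moreover have "sum d {..<k} \<ge> 0" using 2(1) by (intro sum_nonneg) auto
        ultimately have S0: "(\<Sum>i<k. \<beta> i * d i) \<ge> 0" using A
          by (meson order_trans zero_le_mult_iff less_imp_le)
        have "sum d {..<k} \<le> (1 / A) * (\<Sum>i<k. \<beta> i * d i)"
          using \<open>A * sum d {..<k} \<le> _\<close> A by (simp add: field_simps)
        also have "\<dots> \<le> max 1 (1 / A) * (\<Sum>i<k. \<beta> i * d i)"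
          using S0 by (intro mult_right_mono) auto
        finally have "sum d {..<k} \<le> max 1 (1 / A) * (\<Sum>i<k. \<beta> i * d i)" .
        moreover have "L1_norm u \<le> max 1 (1 / A) * L1_norm u" using a0 by (simp add: le_max_iff_disj mult_le_cancel_right1)
        ultimately have "L1_norm u + sum d {..<k} \<le> max 1 (1 / A) * (L1_norm u + (\<Sum>i<k. \<beta> i * d i))"
          by (simp add: distrib_left)
        then show ?thesis using C0 by (simp add: C_def mult.assoc)
      qed
      finally show ?thesis using 2(2) unfolding sumeq by simp
    qed
  qed
  then show ?thesis using Cpos by blast
qed

lemma helpK:
  fixes X a A s K :: real
  assumes "X \<ge> 0" "a \<ge> A" "A > 0" "0 < s" "s < 1" "K \<ge> 2 / ((1 - s) * A)"
  shows "2 * s * X \<le> K * (a * s * (1 - s) * X)"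
proof -
  have p: "s * (1 - s) * X \<ge> 0" using assms by simp
  have "2 * s * X = (2 / ((1 - s) * A)) * (A * s * (1 - s) * X)" using assms by (simp add: field_simps)
  also have "\<dots> \<le> K * (A * s * (1 - s) * X)"
    using assms p by (intro mult_right_mono) auto
  also have "\<dots> \<le> K * (a * s * (1 - s) * X)"
  proof -
    have "K \<ge> 0" using assms by (meson order_trans less_imp_le divide_nonneg_pos zero_le_numeral mult_pos_pos diff_gt_0_iff_gt)
    moreover have "A * (s * (1 - s) * X) \<le> a * (s * (1 - s) * X)" using assms p by (intro mult_right_mono) auto
    ultimately show ?thesis by (simp add: mult_left_mono mult.assoc)
  qed
  finally show ?thesis .
qed

lemma lower_frac:
  fixes k :: nat and s :: real and \<alpha> :: "nat \<Rightarrow> real"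
  assumes k: "k \<ge> 1" and s: "0 < s" "s < 1" and a: "\<forall>i\<le>k. \<alpha> i > 0"
  shows "\<exists>C>0. \<forall>u v. L1_on u \<longrightarrow> (\<forall>i<k-1. v i \<in> BV_set) \<longrightarrow> in_Wsp s (1 + s * (1 - s)) (v (k - 1)) \<longrightarrow>
     dtv u (\<lambda>_. 0) \<le> ereal C * (ereal (L1_norm u) +
       ((\<Sum>i<k. ereal (\<alpha> i) * dtv (if i = 0 then u else v (i - 1))
                                  (if i = k - 1 then (\<lambda>x. s * v (k - 1) x) else v i))
      + ereal (\<alpha> k * s * (1 - s)) * Wsp_semi s (1 + s * (1 - s)) (v (k - 1))
      + ereal (\<alpha> (k - 1) * s * (1 - s) * \<bar>LINT x:I01|lborel. v (k - 1) x\<bar>)))"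
proof -
  define p where "p = 1 + s * (1 - s)"
  have p: "p > 1" using s by (simp add: p_def)
  obtain C0 where C0: "C0 > 0" "\<forall>w d B. (\<forall>i\<le>k. L1_on (w i)) \<longrightarrow> (\<forall>i<k. dtv (w i) (w (Suc i)) \<le> ereal (d i)) \<longrightarrow>
     (\<forall>\<phi>\<in>test_fns. \<bar>LINT x:I01|lborel. w k x * \<phi> x\<bar> \<le> B) \<longrightarrow>
     dtv (w 0) (\<lambda>_. 0) \<le> ereal (C0 * (L1_norm (w 0) + sum d {..<k} + B))"
    using core[OF k] by blast
  have a': "\<forall>i<Suc k. \<alpha> i > 0" using a by auto
  obtain A where A: "A > 0" "\<forall>i<Suc k. \<alpha> i \<ge> A" using Min_pos[OF a'] by auto
  define K1 where "K1 = max 1 (2 / ((1 - s) * A))"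
  have K1: "K1 \<ge> 1" "K1 \<ge> 2 / ((1 - s) * A)" by (auto simp: K1_def)
  have K1A: "K1 \<ge> 1 / A"
  proof -
    have "1 / A \<le> 2 / ((1 - s) * A)" using A s by (simp add: field_simps)
    then show ?thesis using K1 by linarith
  qed
  define C where "C = C0 * K1"
  have Cpos: "C > 0" using C0 K1 by (simp add: C_def)
  have "dtv u (\<lambda>_. 0) \<le> ereal C * (ereal (L1_norm u) +
       ((\<Sum>i<k. ereal (\<alpha> i) * dtv (if i = 0 then u else v (i - 1))
                                  (if i = k - 1 then (\<lambda>x. s * v (k - 1) x) else v i))
      + ereal (\<alpha> k * s * (1 - s)) * Wsp_semi s (1 + s * (1 - s)) (v (k - 1))
      + ereal (\<alpha> (k - 1) * s * (1 - s) * \<bar>LINT x:I01|lborel. v (k - 1) x\<bar>)))"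
    if u: "L1_on u" and v: "\<forall>i<k-1. v i \<in> BV_set" and W: "in_Wsp s (1 + s * (1 - s)) (v (k - 1))" for u v
  proof -
    have W': "in_Wsp s p (v (k - 1))" using W by (simp add: p_def)
    define Gr where "Gr = enn2real (gagliardo s p (v (k - 1)))"
    define Wr where "Wr = Gr powr (1 / p)"
    have Wr0: "Wr \<ge> 0" by (simp add: Wr_def)
    have Gfin: "gagliardo s p (v (k - 1)) \<noteq> \<infinity>" using W' by (auto simp: in_Wsp_def)
    have Wsp: "Wsp_semi s (1 + s * (1 - s)) (v (k - 1)) = ereal Wr"
      using Gfin by (simp add: Wsp_semi_def Wr_def Gr_def p_def)
    define m where "m = (LINT x:I01|lborel. v (k - 1) x)"
    define B where "B = s * (2 * Wr + \<bar>m\<bar>)"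
    define w where "w i = (if i = 0 then u else if i < k then v (i - 1) else (\<lambda>x. s * v (k - 1) x))" for i :: nat
    have wS: "\<And>i. i < k \<Longrightarrow> w (Suc i) = (if i = k - 1 then (\<lambda>x. s * v (k - 1) x) else v i)"
      by (auto simp: w_def)
    have w0: "\<And>i. i < k \<Longrightarrow> w i = (if i = 0 then u else v (i - 1))"
      by (auto simp: w_def)
    define T where "T i = dtv (w i) (w (Suc i))" for i :: nat
    have sumeq: "(\<Sum>i<k. ereal (\<alpha> i) * dtv (if i = 0 then u else v (i - 1))
                                  (if i = k - 1 then (\<lambda>x. s * v (k - 1) x) else v i))
        = (\<Sum>i<k. ereal (\<alpha> i) * T i)"
      by (rule sum.cong) (auto simp: T_def wS w0)
    have Tn: "\<forall>i<k. T i \<ge> 0" by (simp add: T_def dtv_nonneg)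
    have a0: "L1_norm u \<ge> 0" by (rule L1_norm_nonneg)
    have ak: "\<forall>i<k. \<alpha> i > 0" using a by auto
    have E2: "ereal (\<alpha> k * s * (1 - s)) * Wsp_semi s (1 + s * (1 - s)) (v (k - 1)) = ereal (\<alpha> k * s * (1 - s) * Wr)"
      unfolding Wsp by simp
    consider "(\<Sum>i<k. ereal (\<alpha> i) * T i) = \<infinity>"
      | d where "\<forall>i<k. T i = ereal (d i) \<and> d i \<ge> 0" "(\<Sum>i<k. ereal (\<alpha> i) * T i) = ereal (\<Sum>i<k. \<alpha> i * d i)"
      using ereal_sum_cases[OF ak Tn] by blast
    then show ?thesis
    proof cases
      case 1 then show ?thesis using Cpos unfolding sumeq E2 by simp
    next
      case 2
      have L1v: "L1_on (v (k - 1))" using Wsp_L1[OF p W'] .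
      have L1w: "\<forall>i\<le>k. L1_on (w i)"
      proof (intro allI impI)
        fix i assume "i \<le> k"
        show "L1_on (w i)"
          using u v L1v \<open>i \<le> k\<close> by (auto simp: w_def BV_set_def L1_on_def)
      qed
      have top: "\<forall>\<phi>\<in>test_fns. \<bar>LINT x:I01|lborel. w k x * \<phi> x\<bar> \<le> B"
      proof
        fix \<phi> assume \<phi>: "\<phi> \<in> test_fns"
        have "\<bar>LINT x:I01|lborel. v (k - 1) x * \<phi> x\<bar> \<le> 2 * Wr + \<bar>m\<bar>"
          using frac_test[OF p s(1) W' \<phi>] by (simp add: Wr_def Gr_def m_def)
        then have "s * \<bar>LINT x:I01|lborel. v (k - 1) x * \<phi> x\<bar> \<le> B"
          unfolding B_def using s by (intro mult_left_mono) auto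
        moreover have "(LINT x:I01|lborel. w k x * \<phi> x) = s * (LINT x:I01|lborel. v (k - 1) x * \<phi> x)"
          using k by (simp add: w_def mult.assoc)
        ultimately show "\<bar>LINT x:I01|lborel. w k x * \<phi> x\<bar> \<le> B" using s by (simp add: abs_mult)
      qed
      have Dd: "\<forall>i<k. dtv (w i) (w (Suc i)) \<le> ereal (d i)" using 2(1) by (simp add: T_def)
      have "dtv u (\<lambda>_. 0) \<le> ereal (C0 * (L1_norm u + sum d {..<k} + B))"
      proof -
        have "dtv (w 0) (\<lambda>_. 0) \<le> ereal (C0 * (L1_norm (w 0) + sum d {..<k} + B))"
          using C0(2) L1w Dd top by blast
        then show ?thesis by (simp add: w_def)
      qed
      also have "C0 * (L1_norm u + sum d {..<k} + B)
          \<le> C * (L1_norm u + ((\<Sum>i<k. \<alpha> i * d i) + \<alpha> k * s * (1 - s) * Wr + \<alpha> (k - 1) * s * (1 - s) * \<bar>m\<bar>))"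
      proof -
        have sd0: "sum d {..<k} \<ge> 0" using 2(1) by (intro sum_nonneg) auto
        have "A * sum d {..<k} \<le> (\<Sum>i<k. \<alpha> i * d i)"
          using sum_weighted_ge[where k=k and \<beta>=\<alpha> and A=A and d=d] A 2(1) by auto
        then have t1: "sum d {..<k} \<le> K1 * (\<Sum>i<k. \<alpha> i * d i)"
        proof -
          assume h: "A * sum d {..<k} \<le> (\<Sum>i<k. \<alpha> i * d i)"
          have "sum d {..<k} \<le> (1 / A) * (\<Sum>i<k. \<alpha> i * d i)" using h A by (simp add: field_simps)
          also have "\<dots> \<le> K1 * (\<Sum>i<k. \<alpha> i * d i)"
          proof -
            have "0 \<le> A * sum d {..<k}" using A sd0 by simp
            then have S0: "0 \<le> (\<Sum>i<k. \<alpha> i * d i)" using h by linarith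
            show ?thesis by (rule mult_right_mono[OF K1A S0])
          qed
          finally show ?thesis .
        qed
        have t2: "2 * s * Wr \<le> K1 * (\<alpha> k * s * (1 - s) * Wr)"
          by (rule helpK) (use Wr0 A s K1 in auto)
        have t3: "2 * s * \<bar>m\<bar> \<le> K1 * (\<alpha> (k - 1) * s * (1 - s) * \<bar>m\<bar>)"
          by (rule helpK) (use A s K1 k in auto)
        have t4: "L1_norm u \<le> K1 * L1_norm u" using K1 a0 by (simp add: mult_le_cancel_right1)
        have "s * \<bar>m\<bar> \<le> 2 * s * \<bar>m\<bar>" using s by simp
        then have "L1_norm u + sum d {..<k} + B
            \<le> K1 * (L1_norm u + ((\<Sum>i<k. \<alpha> i * d i) + \<alpha> k * s * (1 - s) * Wr + \<alpha> (k - 1) * s * (1 - s) * \<bar>m\<bar>))"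
        proof -
          have e1: "K1 * (L1_norm u + ((\<Sum>i<k. \<alpha> i * d i) + \<alpha> k * s * (1 - s) * Wr + \<alpha> (k - 1) * s * (1 - s) * \<bar>m\<bar>))
             = K1 * L1_norm u + K1 * (\<Sum>i<k. \<alpha> i * d i) + K1 * (\<alpha> k * s * (1 - s) * Wr) + K1 * (\<alpha> (k - 1) * s * (1 - s) * \<bar>m\<bar>)"
            by (simp add: distrib_left)
          have e2: "B = 2 * s * Wr + s * \<bar>m\<bar>" by (simp add: B_def distrib_left)
          show ?thesis unfolding e1 e2 using t1 t2 t3 t4 \<open>s * \<bar>m\<bar> \<le> 2 * s * \<bar>m\<bar>\<close> by linarith
        qed
        then show ?thesis using C0 by (simp add: C_def mult.assoc)
      qed
      finally show ?thesis using 2(2) unfolding sumeq E2 by (simp add: m_def)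
    qed
  qed
  then show ?thesis using Cpos by blast
qed

lemma dtv_00: "dtv (\<lambda>_. 0) (\<lambda>_. 0) = 0"
proof -
  have ne: "test_fns \<noteq> {}" unfolding test_fns_def by (auto intro!: exI[of _ "\<lambda>_. 0"] exI[of _ "1/2"])
  have "dtv (\<lambda>_. 0) (\<lambda>_. 0) = (SUP \<phi>\<in>test_fns. (0::ereal))"
    unfolding dtv_def by (simp add: zero_ereal_def)
  also have "\<dots> = 0" using ne by simp
  finally show ?thesis .
qed

lemma zero_BV: "(\<lambda>_. 0) \<in> BV_set"
  using L1_const[of 0] dtv_00 by (simp add: BV_set_def)

lemma gagliardo_zero: "gagliardo s p (\<lambda>_. 0) = 0"
  by (simp add: gagliardo_def)

lemma zero_Wsp: "in_Wsp s p (\<lambda>_. 0)"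
  by (simp add: in_Wsp_def gagliardo_zero)

lemma Wsp_zero: "Wsp_semi s p (\<lambda>_. 0) = 0"
  by (simp add: Wsp_semi_def gagliardo_zero)

lemma sum_only0:
  fixes F :: "nat \<Rightarrow> ereal"
  assumes "k \<ge> 1" "\<forall>i. i \<noteq> 0 \<longrightarrow> F i = 0"
  shows "(\<Sum>i<k. F i) = F 0"
proof -
  have "(\<Sum>i<k. F i) = (\<Sum>i\<in>{0}. F i)"
    by (rule sum.mono_neutral_right) (use assms in auto)
  then show ?thesis by simp
qed

lemma upper_int:
  fixes k :: nat and \<beta> :: "nat \<Rightarrow> real"
  assumes k: "k \<ge> 1"
  shows "TGV_int k \<beta> u \<le> ereal (\<beta> 0) * dtv u (\<lambda>_. 0)"
proof -
  define v0 :: "nat \<Rightarrow> real \<Rightarrow> real" where "v0 = (\<lambda>_ _. 0)"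
  have "v0 \<in> {v :: nat \<Rightarrow> real \<Rightarrow> real. \<forall>i<k-1. v i \<in> BV_set}" using zero_BV by (simp add: v0_def)
  then have "TGV_int k \<beta> u \<le> (\<Sum>i<k. ereal (\<beta> i) * dtv (if i = 0 then u else v0 (i - 1))
                                  (if i = k - 1 then (\<lambda>_. 0) else v0 i))"
    unfolding TGV_int_def by (rule INF_lower)
  also have "\<dots> = ereal (\<beta> 0) * dtv u (\<lambda>_. 0)"
    by (subst sum_only0[OF k]) (auto simp: v0_def dtv_00)
  finally show ?thesis .
qed

lemma upper_frac:
  fixes k :: nat and s :: real and \<alpha> :: "nat \<Rightarrow> real"
  assumes k: "k \<ge> 1"
  shows "TGV_frac k s \<alpha> u \<le> ereal (\<alpha> 0) * dtv u (\<lambda>_. 0)"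
proof -
  define v0 :: "nat \<Rightarrow> real \<Rightarrow> real" where "v0 = (\<lambda>_ _. 0)"
  have "v0 \<in> {v :: nat \<Rightarrow> real \<Rightarrow> real. (\<forall>i<k-1. v i \<in> BV_set) \<and> in_Wsp s (1 + s * (1 - s)) (v (k - 1))}"
    using zero_BV zero_Wsp by (simp add: v0_def)
  then have "TGV_frac k s \<alpha> u \<le> (\<Sum>i<k. ereal (\<alpha> i) * dtv (if i = 0 then u else v0 (i - 1))
                                  (if i = k - 1 then (\<lambda>x. s * v0 (k - 1) x) else v0 i))
      + ereal (\<alpha> k * s * (1 - s)) * Wsp_semi s (1 + s * (1 - s)) (v0 (k - 1))
      + ereal (\<alpha> (k - 1) * s * (1 - s) * \<bar>LINT x:I01|lborel. v0 (k - 1) x\<bar>)"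
    unfolding TGV_frac_def by (rule INF_lower)
  also have "\<dots> = ereal (\<alpha> 0) * dtv u (\<lambda>_. 0)"
  proof -
    have "(\<Sum>i<k. ereal (\<alpha> i) * dtv (if i = 0 then u else v0 (i - 1))
                                  (if i = k - 1 then (\<lambda>x. s * v0 (k - 1) x) else v0 i))
          = ereal (\<alpha> 0) * dtv u (\<lambda>_. 0)"
      by (subst sum_only0[OF k]) (auto simp: v0_def dtv_00)
    moreover have "Wsp_semi s (1 + s * (1 - s)) (v0 (k - 1)) = 0"
      using Wsp_zero by (simp add: v0_def)
    ultimately show ?thesis by (simp add: v0_def)
  qed
  finally show ?thesis .
qed

lemma TGV_int_nonneg:
  assumes "\<forall>i<k. \<beta> i > 0"
  shows "TGV_int k \<beta> u \<ge> 0"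
  unfolding TGV_int_def
  by (rule INF_greatest, rule sum_nonneg) (use assms dtv_nonneg in auto)

lemma TGV_frac_nonneg:
  assumes "\<forall>i\<le>k. \<alpha> i > 0" "0 < s" "s < 1"
  shows "TGV_frac k s \<alpha> u \<ge> 0"
  unfolding TGV_frac_def
proof (rule INF_greatest)
  fix v
  have a: "(\<Sum>i<k. ereal (\<alpha> i) * dtv (if i = 0 then u else v (i - 1))
                                  (if i = k - 1 then (\<lambda>x. s * v (k - 1) x) else v i)) \<ge> 0"
  proof -
    have ak: "\<forall>i<k. 0 \<le> \<alpha> i" using assms(1) by (auto intro: less_imp_le)
    show ?thesis by (rule sum_nonneg) (use ak dtv_nonneg in \<open>auto simp: ereal_zero_le_0_iff\<close>)
  qed
  have "Wsp_semi s (1 + s * (1 - s)) (v (k - 1)) \<ge> 0" by (simp add: Wsp_semi_def)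
  then have b: "ereal (\<alpha> k * s * (1 - s)) * Wsp_semi s (1 + s * (1 - s)) (v (k - 1)) \<ge> 0"
    using assms by (auto simp: ereal_zero_le_0_iff)
  have c: "ereal (\<alpha> (k - 1) * s * (1 - s) * \<bar>LINT x:I01|lborel. v (k - 1) x\<bar>) \<ge> 0"
  proof -
    have "\<alpha> (k - 1) > 0" using assms(1) by auto
    then have "0 \<le> \<alpha> (k - 1) * s * (1 - s) * \<bar>LINT x:I01|lborel. v (k - 1) x\<bar>"
      using assms(2,3) by simp
    then show ?thesis by (simp add: zero_ereal_def)
  qed
  show "0 \<le> (\<Sum>i<k. ereal (\<alpha> i) * dtv (if i = 0 then u else v (i - 1))
                                  (if i = k - 1 then (\<lambda>x. s * v (k - 1) x) else v i))
      + ereal (\<alpha> k * s * (1 - s)) * Wsp_semi s (1 + s * (1 - s)) (v (k - 1))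
      + ereal (\<alpha> (k - 1) * s * (1 - s) * \<bar>LINT x:I01|lborel. v (k - 1) x\<bar>)"
    using a b c by (simp add: add_nonneg_nonneg)
qed

lemma INF_bound:
  fixes D :: ereal and F :: "'a \<Rightarrow> ereal"
  assumes h: "\<forall>v\<in>S. D \<le> ereal C * (ereal a + F v)" and C: "C > 0" and F: "\<forall>v\<in>S. F v \<ge> 0"
  shows "D \<le> ereal C * (ereal a + (INF v\<in>S. F v))"
proof (cases "(INF v\<in>S. F v) = \<infinity>")
  case True then show ?thesis using C by simp
next
  case False
  then have "(INF v\<in>S. F v) < \<infinity>" by (simp add: less_top)
  then obtain v0 where v0: "v0 \<in> S" "F v0 < \<infinity>" unfolding INF_less_iff by blast
  have "D \<le> ereal C * (ereal a + F v0)" using h v0 by auto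
  moreover have "ereal C * (ereal a + F v0) < \<infinity>"
    using v0 F by (cases "F v0") auto
  ultimately have "D < \<infinity>" by auto
  have ge0: "(INF v\<in>S. F v) \<ge> 0" using F by (intro INF_greatest) auto
  show ?thesis
  proof (cases D)
    case (real Dr)
    obtain y where y: "(INF v\<in>S. F v) = ereal y" using False ge0 by (cases "(INF v\<in>S. F v)") auto
    have "ereal (Dr / C - a) \<le> (INF v\<in>S. F v)"
    proof (rule INF_greatest)
      fix v assume "v \<in> S"
      show "ereal (Dr / C - a) \<le> F v"
      proof (cases "F v")
        case (real f)
        have "ereal Dr \<le> ereal C * (ereal a + ereal f)" using h \<open>v \<in> S\<close> real \<open>D = ereal Dr\<close> by auto
        then have "Dr \<le> C * (a + f)" by simp
        then have "Dr / C - a \<le> f" using C by (simp add: field_simps)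
        then show ?thesis using real by simp
      qed (use F \<open>v \<in> S\<close> in auto)
    qed
    then have "Dr / C - a \<le> y" using y by simp
    then have "Dr \<le> C * (a + y)" using C by (simp add: field_simps)
    then show ?thesis using real y by simp
  qed (use \<open>D < \<infinity>\<close> ge0 C in auto)
qed

lemma lin1:
  fixes a x y c C :: real
  assumes "a \<ge> 0" "x \<ge> 0" "y \<le> c * x" "C \<ge> 1" "C \<ge> c"
  shows "a + y \<le> C * (a + x)"
proof -
  have "a \<le> C * a" using assms by (simp add: mult_le_cancel_right1)
  moreover have "c * x \<le> C * x" using assms by (intro mult_right_mono) auto
  ultimately show ?thesis using assms by (simp add: distrib_left)
qed

lemma lin2:
  fixes a x y c C :: real
  assumes "a \<ge> 0" "y \<ge> 0" "x \<le> c * (a + y)" "c \<ge> 0" "C \<ge> 1 + c"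
  shows "a + x \<le> C * (a + y)"
proof -
  have "a + x \<le> (1 + c) * (a + y)" using assms by (simp add: distrib_right)
  also have "\<dots> \<le> C * (a + y)" using assms by (intro mult_right_mono) auto
  finally show ?thesis .
qed

lemma ereal_fin:
  fixes D :: ereal
  assumes "D \<ge> 0" "D < \<infinity>"
  shows "\<exists>r\<ge>0. D = ereal r"
  using assms by (cases D) auto

theorem proposition3p7:
  fixes k :: nat and s :: real and \<beta> \<alpha> :: "nat \<Rightarrow> real"
  assumes "k \<ge> 1" and "0 < s" and "s < 1"
    and "\<forall>i<k. \<beta> i > 0" and "\<forall>i\<le>k. \<alpha> i > 0"
  shows "BV_set = BGV_int_set k \<beta> \<and> BV_set = BGV_frac_set k s \<alpha> \<and>
    (\<exists>C>0. \<forall>u\<in>BV_set.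
        BGV_int_norm k \<beta> u \<le> ereal C * BV_norm u \<and> BV_norm u \<le> ereal C * BGV_int_norm k \<beta> u \<and>
        BGV_frac_norm k s \<alpha> u \<le> ereal C * BV_norm u \<and> BV_norm u \<le> ereal C * BGV_frac_norm k s \<alpha> u)"
proof -
  note k = assms(1) and s = assms(2,3) and b = assms(4) and a = assms(5)
  obtain Ci where Ci: "Ci > 0" "\<forall>u v. L1_on u \<longrightarrow> (\<forall>i<k-1. v i \<in> BV_set) \<longrightarrow>
     dtv u (\<lambda>_. 0) \<le> ereal Ci * (ereal (L1_norm u) +
        (\<Sum>i<k. ereal (\<beta> i) * dtv (if i = 0 then u else v (i - 1)) (if i = k - 1 then (\<lambda>_. 0) else v i)))"
    using lower_int[OF k b] by blast
  obtain Cf where Cf: "Cf > 0" "\<forall>u v. L1_on u \<longrightarrow> (\<forall>i<k-1. v i \<in> BV_set) \<longrightarrow> in_Wsp s (1 + s * (1 - s)) (v (k - 1)) \<longrightarrow>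
     dtv u (\<lambda>_. 0) \<le> ereal Cf * (ereal (L1_norm u) +
       ((\<Sum>i<k. ereal (\<alpha> i) * dtv (if i = 0 then u else v (i - 1))
                                  (if i = k - 1 then (\<lambda>x. s * v (k - 1) x) else v i))
      + ereal (\<alpha> k * s * (1 - s)) * Wsp_semi s (1 + s * (1 - s)) (v (k - 1))
      + ereal (\<alpha> (k - 1) * s * (1 - s) * \<bar>LINT x:I01|lborel. v (k - 1) x\<bar>)))"
    using lower_frac[OF k s a] by blast
  have bk: "\<forall>i<k. 0 \<le> \<beta> i" using b by (auto intro: less_imp_le)
  have ak: "\<forall>i<k. 0 \<le> \<alpha> i" using a by (auto intro: less_imp_le)
  have LI: "dtv u (\<lambda>_. 0) \<le> ereal Ci * (ereal (L1_norm u) + TGV_int k \<beta> u)" if u: "L1_on u" for u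
    unfolding TGV_int_def
  proof (rule INF_bound)
    show "\<forall>v\<in>{v. \<forall>i<k - 1. v i \<in> BV_set}. dtv u (\<lambda>_. 0) \<le> ereal Ci * (ereal (L1_norm u) +
        (\<Sum>i<k. ereal (\<beta> i) * dtv (if i = 0 then u else v (i - 1)) (if i = k - 1 then (\<lambda>_. 0) else v i)))"
      using Ci(2) u by blast
    show "Ci > 0" by fact
    show "\<forall>v\<in>{v. \<forall>i<k - 1. v i \<in> BV_set}. 0 \<le> (\<Sum>i<k. ereal (\<beta> i) * dtv (if i = 0 then u else v (i - 1)) (if i = k - 1 then (\<lambda>_. 0) else v i))"
      by (intro ballI sum_nonneg) (use bk dtv_nonneg in \<open>auto simp: ereal_zero_le_0_iff\<close>)
  qed
  have LF: "dtv u (\<lambda>_. 0) \<le> ereal Cf * (ereal (L1_norm u) + TGV_frac k s \<alpha> u)" if u: "L1_on u" for u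
    unfolding TGV_frac_def
  proof (rule INF_bound)
    show "\<forall>v\<in>{v. (\<forall>i<k-1. v i \<in> BV_set) \<and> in_Wsp s (1 + s * (1 - s)) (v (k - 1))}. dtv u (\<lambda>_. 0) \<le> ereal Cf * (ereal (L1_norm u) +
       ((\<Sum>i<k. ereal (\<alpha> i) * dtv (if i = 0 then u else v (i - 1))
                                  (if i = k - 1 then (\<lambda>x. s * v (k - 1) x) else v i))
      + ereal (\<alpha> k * s * (1 - s)) * Wsp_semi s (1 + s * (1 - s)) (v (k - 1))
      + ereal (\<alpha> (k - 1) * s * (1 - s) * \<bar>LINT x:I01|lborel. v (k - 1) x\<bar>)))"
      using Cf(2) u by blast
    show "Cf > 0" by fact
    show "\<forall>v\<in>{v. (\<forall>i<k-1. v i \<in> BV_set) \<and> in_Wsp s (1 + s * (1 - s)) (v (k - 1))}. 0 \<le>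
       ((\<Sum>i<k. ereal (\<alpha> i) * dtv (if i = 0 then u else v (i - 1))
                                  (if i = k - 1 then (\<lambda>x. s * v (k - 1) x) else v i))
      + ereal (\<alpha> k * s * (1 - s)) * Wsp_semi s (1 + s * (1 - s)) (v (k - 1))
      + ereal (\<alpha> (k - 1) * s * (1 - s) * \<bar>LINT x:I01|lborel. v (k - 1) x\<bar>))"
    proof
      fix v
      have "0 \<le> TGV_frac k s \<alpha> u" by (rule TGV_frac_nonneg[OF a s])
      have a1: "(\<Sum>i<k. ereal (\<alpha> i) * dtv (if i = 0 then u else v (i - 1))
                                  (if i = k - 1 then (\<lambda>x. s * v (k - 1) x) else v i)) \<ge> 0"
        by (rule sum_nonneg) (use ak dtv_nonneg in \<open>auto simp: ereal_zero_le_0_iff\<close>)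
      have "Wsp_semi s (1 + s * (1 - s)) (v (k - 1)) \<ge> 0" by (simp add: Wsp_semi_def)
      then have b1: "ereal (\<alpha> k * s * (1 - s)) * Wsp_semi s (1 + s * (1 - s)) (v (k - 1)) \<ge> 0"
        using a s by (auto simp: ereal_zero_le_0_iff)
      have "\<alpha> (k - 1) > 0" using a by auto
      then have "0 \<le> \<alpha> (k - 1) * s * (1 - s) * \<bar>LINT x:I01|lborel. v (k - 1) x\<bar>"
        using s by simp
      then have c1: "ereal (\<alpha> (k - 1) * s * (1 - s) * \<bar>LINT x:I01|lborel. v (k - 1) x\<bar>) \<ge> 0"
        by (simp add: zero_ereal_def)
      show "0 \<le> ((\<Sum>i<k. ereal (\<alpha> i) * dtv (if i = 0 then u else v (i - 1))
                                  (if i = k - 1 then (\<lambda>x. s * v (k - 1) x) else v i))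
      + ereal (\<alpha> k * s * (1 - s)) * Wsp_semi s (1 + s * (1 - s)) (v (k - 1))
      + ereal (\<alpha> (k - 1) * s * (1 - s) * \<bar>LINT x:I01|lborel. v (k - 1) x\<bar>))"
        using a1 b1 c1 by (simp add: add_nonneg_nonneg)
    qed
  qed
  have UI: "TGV_int k \<beta> u \<le> ereal (\<beta> 0) * dtv u (\<lambda>_. 0)" for u by (rule upper_int[OF k])
  have UF: "TGV_frac k s \<alpha> u \<le> ereal (\<alpha> 0) * dtv u (\<lambda>_. 0)" for u by (rule upper_frac[OF k])
  have TI0: "TGV_int k \<beta> u \<ge> 0" for u by (rule TGV_int_nonneg[OF b])
  have TF0: "TGV_frac k s \<alpha> u \<ge> 0" for u by (rule TGV_frac_nonneg[OF a s])
  have b0: "\<beta> 0 > 0" using b k by auto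
  have a0: "\<alpha> 0 > 0" using a by auto
  have eq1: "BV_set = BGV_int_set k \<beta>"
  proof (intro set_eqI iffI)
    fix u assume "u \<in> BV_set"
    then have u: "L1_on u" "dtv u (\<lambda>_. 0) < \<infinity>" by (auto simp: BV_set_def)
    obtain Dr where "dtv u (\<lambda>_. 0) = ereal Dr" using ereal_fin[OF dtv_nonneg u(2)] by blast
    then have "TGV_int k \<beta> u < \<infinity>" using UI[of u] by (auto intro: le_less_trans)
    then show "u \<in> BGV_int_set k \<beta>" using u by (simp add: BGV_int_set_def)
  next
    fix u assume "u \<in> BGV_int_set k \<beta>"
    then have u: "L1_on u" "TGV_int k \<beta> u < \<infinity>" by (auto simp: BGV_int_set_def)
    obtain Tr where "TGV_int k \<beta> u = ereal Tr" using ereal_fin[OF TI0 u(2)] by blast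
    then have "dtv u (\<lambda>_. 0) < \<infinity>" using LI[OF u(1)] by (auto intro: le_less_trans)
    then show "u \<in> BV_set" using u by (simp add: BV_set_def)
  qed
  have eq2: "BV_set = BGV_frac_set k s \<alpha>"
  proof (intro set_eqI iffI)
    fix u assume "u \<in> BV_set"
    then have u: "L1_on u" "dtv u (\<lambda>_. 0) < \<infinity>" by (auto simp: BV_set_def)
    obtain Dr where "dtv u (\<lambda>_. 0) = ereal Dr" using ereal_fin[OF dtv_nonneg u(2)] by blast
    then have "TGV_frac k s \<alpha> u < \<infinity>" using UF[of u] by (auto intro: le_less_trans)
    then show "u \<in> BGV_frac_set k s \<alpha>" using u by (simp add: BGV_frac_set_def)
  next
    fix u assume "u \<in> BGV_frac_set k s \<alpha>"
    then have u: "L1_on u" "TGV_frac k s \<alpha> u < \<infinity>" by (auto simp: BGV_frac_set_def)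
    obtain Tr where "TGV_frac k s \<alpha> u = ereal Tr" using ereal_fin[OF TF0 u(2)] by blast
    then have "dtv u (\<lambda>_. 0) < \<infinity>" using LF[OF u(1)] by (auto intro: le_less_trans)
    then show "u \<in> BV_set" using u by (simp add: BV_set_def)
  qed
  define C where "C = max (max 1 (\<beta> 0)) (max (\<alpha> 0) (1 + max Ci Cf))"
  have C: "C > 0" "C \<ge> 1" "C \<ge> \<beta> 0" "C \<ge> \<alpha> 0" "C \<ge> 1 + Ci" "C \<ge> 1 + Cf"
    by (auto simp: C_def)
  have "\<forall>u\<in>BV_set.
        BGV_int_norm k \<beta> u \<le> ereal C * BV_norm u \<and> BV_norm u \<le> ereal C * BGV_int_norm k \<beta> u \<and>
        BGV_frac_norm k s \<alpha> u \<le> ereal C * BV_norm u \<and> BV_norm u \<le> ereal C * BGV_frac_norm k s \<alpha> u"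
  proof
    fix u assume "u \<in> BV_set"
    then have u: "L1_on u" "dtv u (\<lambda>_. 0) < \<infinity>" by (auto simp: BV_set_def)
    have uI: "TGV_int k \<beta> u < \<infinity>" using \<open>u \<in> BV_set\<close> eq1 by (auto simp: BGV_int_set_def)
    have uF: "TGV_frac k s \<alpha> u < \<infinity>" using \<open>u \<in> BV_set\<close> eq2 by (auto simp: BGV_frac_set_def)
    obtain Dr where Dr: "Dr \<ge> 0" "dtv u (\<lambda>_. 0) = ereal Dr" using ereal_fin[OF dtv_nonneg u(2)] by blast
    obtain Tr where Tr: "Tr \<ge> 0" "TGV_int k \<beta> u = ereal Tr" using ereal_fin[OF TI0 uI] by blast
    obtain Fr where Fr: "Fr \<ge> 0" "TGV_frac k s \<alpha> u = ereal Fr" using ereal_fin[OF TF0 uF] by blast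
    define A where "A = L1_norm u"
    have A: "A \<ge> 0" by (simp add: A_def L1_norm_nonneg)
    have h1: "Tr \<le> \<beta> 0 * Dr" using UI[of u] Tr Dr by simp
    have h2: "Fr \<le> \<alpha> 0 * Dr" using UF[of u] Tr Fr Dr by simp
    have h3: "Dr \<le> Ci * (A + Tr)" using LI[OF u(1)] Tr Dr by (simp add: A_def)
    have h4: "Dr \<le> Cf * (A + Fr)" using LF[OF u(1)] Fr Dr by (simp add: A_def)
    have "A + Tr \<le> C * (A + Dr)" by (rule lin1[where c="\<beta> 0"]) (use A Dr h1 C in auto)
    moreover have "A + Dr \<le> C * (A + Tr)" by (rule lin2[where c=Ci]) (use A Tr h3 C Ci in auto)
    moreover have "A + Fr \<le> C * (A + Dr)" by (rule lin1[where c="\<alpha> 0"]) (use A Dr h2 C in auto)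
    moreover have "A + Dr \<le> C * (A + Fr)" by (rule lin2[where c=Cf]) (use A Fr h4 C Cf in auto)
    ultimately show "BGV_int_norm k \<beta> u \<le> ereal C * BV_norm u \<and> BV_norm u \<le> ereal C * BGV_int_norm k \<beta> u \<and>
        BGV_frac_norm k s \<alpha> u \<le> ereal C * BV_norm u \<and> BV_norm u \<le> ereal C * BGV_frac_norm k s \<alpha> u"
      by (simp add: BGV_int_norm_def BV_norm_def BGV_frac_norm_def Dr Tr Fr A_def)
  qed
  then show ?thesis using eq1 eq2 C(1) by blast
qed

end
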